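(* Let $X$ and $Y$ be Banach spaces over $\mathbb{K}\in\{\mathbb{R},\mathbb{C}\}$, $\Gamma$ an arbitrary set, $E$ an invariant sequence space over $X$, and for each $\lambda\in\Gamma$ let $E_\lambda$ be a strongly invariant sequence space over $Y$. Suppose $f\colon X\to Y$ is compatible with $E_\lambda$ for every $\lambda\in\Gamma$, and that the family $(E_\lambda)_{\lambda\in\Gamma}$ is nested. Then the set $$G\big(E,f,(E_\lambda)_{\lambda\in\Gamma}\big)=\Big\{(x_j)_{j=1}^\infty\in E:\ (f(x_j))_{j=1}^\infty\notin\bigcup_{\lambda\in\Gamma}E_\lambda\Big\}$$ is either empty or pointwise $\mathfrak{c}$-spaceable in $E$; i.e., if it is nonempty, then for every $x\in G(E,f,(E_\lambda)_{\lambda\in\Gamma})$ there is a closed linear subspace $W_x$ of $E$ with $\dim W_x=\mathfrak{c}$ and $x\in W_x\subset G(E,f,(E_\lambda)_{\lambda\in\Gamma})\cup\{0\}$.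
   Context: $\mathfrak{c}=\operatorname{card}(\mathbb{R})$. Zero-free version: for $x=(x_j)_{j=1}^\infty\in Z^{\mathbb{N}}$ ($Z$ a Banach space), if $x$ has only finitely many nonzero coordinates then $x^0=0$; otherwise $x^0=(x_{j_k})_{k=1}^\infty$ where $x_{j_k}$ is the $k$-th nonzero coordinate of $x$. An invariant sequence space over a Banach space $Z\neq\{0\}$ is an infinite-dimensional Banach or quasi-Banach space $E$ which is a linear subspace of $Z^{\mathbb{N}}$ (coordinatewise operations) such that: (b1) there is a constant $K$ depending only on $E$ such that for all $x\in Z^{\mathbb{N}}$ with $x^0\neq0$, $x\in E\iff x^0\in E$, and $\|x\|_E\le K\|x^0\|_E$; (b2) $\|x_j\|_Z\le\|x\|_E$ for all $x=(x_j)\in E$ and all $j$. A strongly invariant sequence space over $Z$ is an invariant sequence space $E$ over $Z$ such that $c_{00}(Z)=\{(x_j)\in Z^{\mathbb{N}}: x_j=0\text{ for all but finitely many }j\}\subset E$, and $(x_j)_{j=1}^\infty\in E$ if and only if every subsequence of $(x_j)_{j=1}^\infty$ belongs to $E$. If $E'$ is an invariant sequence space over $Y$, a function $f\colon X\to Y$ with $f(0)=0$ is compatible with $E'$ if for every $X$-valued sequence $(x_j)_{j=1}^\infty$ and every scalar $a\neq0$: $(f(x_j))_{j=1}^\infty\notin E'\Rightarrow (f(ax_j))_{j=1}^\infty\notin E'$. A family $(E_\lambda)_{\lambda\in\Gamma}$ is nested if for all $\lambda_1,\lambda_2\in\Gamma$, either $E_{\lambda_1}\subset E_{\lambda_2}$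 or $E_{\lambda_2}\subset E_{\lambda_1}$. *)

theory Defs
  imports "HOL-Analysis.Analysis" "HOL-Library.Equipollence" "HOL-Library.Infinite_Set" "HOL-Library.Function_Algebras"
begin

(* A Banach space over a scalar field 'k (in practice 'k = real or complex):
   a real Banach space 'a together with a 'k-scalar multiplication extending scaleR
   and satisfying norm (a x) = |a| norm x. *)
definition scalar_structure :: "('k::real_normed_field \<Rightarrow> 'a::banach \<Rightarrow> 'a) \<Rightarrow> bool" where
  "scalar_structure sc \<longleftrightarrow> vector_space sc \<and>
     (\<forall>r x. sc (of_real r) x = scaleR r x) \<and>
     (\<forall>a x. norm (sc a x) = norm a * norm x)"

definition seq_scale :: "('k \<Rightarrow> 'a \<Rightarrow> 'a) \<Rightarrow> 'k \<Rightarrow> (nat \<Rightarrow> 'a) \<Rightarrow> (nat \<Rightarrow> 'a)" where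
  "seq_scale sc a x = (\<lambda>j. sc a (x j))"

definition quasi_banach_seq ::
  "('k::real_normed_field \<Rightarrow> 'a::banach \<Rightarrow> 'a) \<Rightarrow> (nat \<Rightarrow> 'a) set \<Rightarrow> ((nat \<Rightarrow> 'a) \<Rightarrow> real) \<Rightarrow> bool" where
  "quasi_banach_seq sc E q \<longleftrightarrow>
     module.subspace (seq_scale sc) E \<and>
     (\<forall>x\<in>E. q x \<ge> 0 \<and> (q x = 0 \<longleftrightarrow> x = 0)) \<and>
     (\<forall>a. \<forall>x\<in>E. q (seq_scale sc a x) = norm a * q x) \<and>
     (\<exists>C\<ge>1. \<forall>x\<in>E. \<forall>y\<in>E. q (x + y) \<le> C * (q x + q y)) \<and>
     (\<forall>u. (\<forall>n. u n \<in> E) \<and> (\<forall>e>0. \<exists>N. \<forall>m\<ge>N. \<forall>n\<ge>N. q (u m - u n) < e) \<longrightarrow>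
          (\<exists>z\<in>E. (\<lambda>n. q (u n - z)) \<longlonglongrightarrow> 0))"

definition infinite_dim :: "('k::field \<Rightarrow> 'v::ab_group_add \<Rightarrow> 'v) \<Rightarrow> 'v set \<Rightarrow> bool" where
  "infinite_dim sc E \<longleftrightarrow> \<not> (\<exists>B. finite B \<and> B \<subseteq> E \<and> module.span sc B = E)"

(* zero-free version x^0 (indices start at 0) *)
definition zero_free :: "(nat \<Rightarrow> 'a::zero) \<Rightarrow> (nat \<Rightarrow> 'a)" where
  "zero_free x = (if finite {j. x j \<noteq> 0} then (\<lambda>_. 0)
                  else (\<lambda>k. x (enumerate {j. x j \<noteq> 0} k)))"

definition invariant_seq_space ::
  "('k::real_normed_field \<Rightarrow> 'a::banach \<Rightarrow> 'a) \<Rightarrow> (nat \<Rightarrow> 'a) set \<Rightarrow> ((nat \<Rightarrow> 'a) \<Rightarrow> real) \<Rightarrow> bool" where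
  "invariant_seq_space sc E q \<longleftrightarrow>
     (\<exists>z::'a. z \<noteq> 0) \<and>
     quasi_banach_seq sc E q \<and> infinite_dim (seq_scale sc) E \<and>
     (\<exists>K. \<forall>x. zero_free x \<noteq> 0 \<longrightarrow>
          (x \<in> E \<longleftrightarrow> zero_free x \<in> E) \<and> (x \<in> E \<longrightarrow> q x \<le> K * q (zero_free x))) \<and>
     (\<forall>x\<in>E. \<forall>j. norm (x j) \<le> q x)"

definition c00 :: "(nat \<Rightarrow> 'a::zero) set" where
  "c00 = {x. finite {j. x j \<noteq> 0}}"

definition strongly_invariant_seq_space ::
  "('k::real_normed_field \<Rightarrow> 'a::banach \<Rightarrow> 'a) \<Rightarrow> (nat \<Rightarrow> 'a) set \<Rightarrow> ((nat \<Rightarrow> 'a) \<Rightarrow> real) \<Rightarrow> bool" where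
  "strongly_invariant_seq_space sc E q \<longleftrightarrow>
     invariant_seq_space sc E q \<and> c00 \<subseteq> E \<and>
     (\<forall>x. x \<in> E \<longleftrightarrow> (\<forall>r. strict_mono r \<longrightarrow> x \<circ> r \<in> E))"

definition compatible ::
  "('k::zero \<Rightarrow> 'a::zero \<Rightarrow> 'a) \<Rightarrow> ('a \<Rightarrow> 'b::zero) \<Rightarrow> (nat \<Rightarrow> 'b) set \<Rightarrow> bool" where
  "compatible scX f E' \<longleftrightarrow> f 0 = 0 \<and>
     (\<forall>xs (a::'k). a \<noteq> 0 \<longrightarrow> (\<lambda>j. f (xs j)) \<notin> E' \<longrightarrow> (\<lambda>j. f (scX a (xs j))) \<notin> E')"

definition nested :: "'g set \<Rightarrow> ('g \<Rightarrow> 'c set) \<Rightarrow> bool" where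
  "nested \<Gamma> Es \<longleftrightarrow> (\<forall>l1\<in>\<Gamma>. \<forall>l2\<in>\<Gamma>. Es l1 \<subseteq> Es l2 \<or> Es l2 \<subseteq> Es l1)"

definition G_set ::
  "(nat \<Rightarrow> 'a) set \<Rightarrow> ('a \<Rightarrow> 'b) \<Rightarrow> 'g set \<Rightarrow> ('g \<Rightarrow> (nat \<Rightarrow> 'b) set) \<Rightarrow> (nat \<Rightarrow> 'a) set" where
  "G_set E f \<Gamma> Es = {x \<in> E. (\<lambda>j. f (x j)) \<notin> (\<Union>l\<in>\<Gamma>. Es l)}"

(* W is closed in (E, q) (sequential closedness w.r.t. the metrizable quasi-norm topology) *)
definition closed_in_qnorm :: "(nat \<Rightarrow> 'a) set \<Rightarrow> ((nat \<Rightarrow> 'a) \<Rightarrow> real) \<Rightarrow> (nat \<Rightarrow> 'a::ab_group_add) set \<Rightarrow> bool" where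
  "closed_in_qnorm E q W \<longleftrightarrow>
     (\<forall>u z. (\<forall>n. u n \<in> W) \<and> z \<in> E \<and> (\<lambda>n. q (u n - z)) \<longlonglongrightarrow> 0 \<longrightarrow> z \<in> W)"

definition dim_continuum :: "('k::field \<Rightarrow> 'v::ab_group_add \<Rightarrow> 'v) \<Rightarrow> 'v set \<Rightarrow> bool" where
  "dim_continuum sc W \<longleftrightarrow>
     (\<exists>B. \<not> module.dependent sc B \<and> module.span sc B = W \<and> B \<approx> (UNIV :: real set))"

definition pointwise_c_spaceable ::
  "('k::real_normed_field \<Rightarrow> 'a::banach \<Rightarrow> 'a) \<Rightarrow> (nat \<Rightarrow> 'a) set \<Rightarrow> ((nat \<Rightarrow> 'a) \<Rightarrow> real)
     \<Rightarrow> (nat \<Rightarrow> 'a) set \<Rightarrow> bool" where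
  "pointwise_c_spaceable sc E q A \<longleftrightarrow>
     (\<forall>x\<in>A. \<exists>W. W \<subseteq> E \<and> module.subspace (seq_scale sc) W \<and> closed_in_qnorm E q W \<and>
               dim_continuum (seq_scale sc) W \<and> x \<in> W \<and> W \<subseteq> A \<union> {0})"

end

theory Submission
  imports Defs
begin


lemma sum_fun_apply': "(\<Sum>i\<in>A. F i) j = (\<Sum>i\<in>A. (F i) j)"
  by (induction A rule: infinite_finite_induct) auto

locale qb =
  fixes sc :: "'k::{real_normed_field,euclidean_space} \<Rightarrow> 'a::banach \<Rightarrow> 'a"
    and E :: "(nat \<Rightarrow> 'a) set" and q :: "(nat \<Rightarrow> 'a) \<Rightarrow> real"
  assumes ss: "scalar_structure sc" and inv: "invariant_seq_space sc E q"
begin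

lemma vs: "vector_space sc" using ss by (simp add: scalar_structure_def)
lemma norm_sc: "norm (sc a v) = norm a * norm v" using ss by (simp add: scalar_structure_def)

sublocale S: vector_space sc by (rule vs)

lemma VS: "vector_space (seq_scale sc)"
  unfolding vector_space_def module_def seq_scale_def
  by (simp add: fun_eq_iff S.scale_right_distrib S.scale_left_distrib)

sublocale V: vector_space "seq_scale sc" by (rule VS)

lemma qbs: "quasi_banach_seq sc E q" using inv by (simp add: invariant_seq_space_def)
lemma subE: "V.subspace E" using qbs by (simp add: quasi_banach_seq_def)
lemma q_nonneg: "x \<in> E \<Longrightarrow> q x \<ge> 0" using qbs by (simp add: quasi_banach_seq_def)
lemma q_eq0: "x \<in> E \<Longrightarrow> q x = 0 \<longleftrightarrow> x = 0" using qbs by (simp add: quasi_banach_seq_def)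
lemma q_scale: "x \<in> E \<Longrightarrow> q (seq_scale sc a x) = norm a * q x" using qbs by (simp add: quasi_banach_seq_def)
lemma q_complete: "(\<forall>n. u n \<in> E) \<Longrightarrow> (\<forall>e>0. \<exists>N. \<forall>m\<ge>N. \<forall>n\<ge>N. q (u m - u n) < e) \<Longrightarrow>
          (\<exists>z\<in>E. (\<lambda>n. q (u n - z)) \<longlonglongrightarrow> 0)" using qbs by (simp add: quasi_banach_seq_def)
lemma coord_le: "x \<in> E \<Longrightarrow> norm (x j) \<le> q x" using inv by (simp add: invariant_seq_space_def)
lemma infdim: "infinite_dim (seq_scale sc) E" using inv by (simp add: invariant_seq_space_def)

definition CC where "CC = (SOME C. C \<ge> 1 \<and> (\<forall>x\<in>E. \<forall>y\<in>E. q (x + y) \<le> C * (q x + q y)))"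
lemma CC: "CC \<ge> 1 \<and> (\<forall>x\<in>E. \<forall>y\<in>E. q (x + y) \<le> CC * (q x + q y))"
proof -
  have "\<exists>C. C \<ge> 1 \<and> (\<forall>x\<in>E. \<forall>y\<in>E. q (x + y) \<le> C * (q x + q y))"
    using qbs by (simp add: quasi_banach_seq_def)
  then show ?thesis unfolding CC_def by (rule someI_ex)
qed
lemma CC1: "CC \<ge> 1" using CC by auto
lemma qtri: "x \<in> E \<Longrightarrow> y \<in> E \<Longrightarrow> q (x + y) \<le> CC * (q x + q y)" using CC by auto

lemma E0: "0 \<in> E" using subE V.subspace_0 by blast
lemma Eadd: "x \<in> E \<Longrightarrow> y \<in> E \<Longrightarrow> x + y \<in> E" using subE V.subspace_add by blast
lemma Ediff: "x \<in> E \<Longrightarrow> y \<in> E \<Longrightarrow> x - y \<in> E" using subE V.subspace_diff by blast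
lemma Eneg: "x \<in> E \<Longrightarrow> - x \<in> E" using subE V.subspace_neg by blast
lemma Escale: "x \<in> E \<Longrightarrow> seq_scale sc a x \<in> E" using subE V.subspace_scale by blast
lemma Esum: "(\<And>i. i \<in> A \<Longrightarrow> F i \<in> E) \<Longrightarrow> sum F A \<in> E" using subE V.subspace_sum by blast

lemma q0: "q 0 = 0" using q_eq0 E0 by blast
lemma q0': "q (\<lambda>a. 0) = 0" using q0 by (simp add: zero_fun_def)
lemma E0': "(\<lambda>a. 0) \<in> E" using E0 by (simp add: zero_fun_def)

lemma q_neg: "x \<in> E \<Longrightarrow> q (- x) = q x"
proof -
  assume x: "x \<in> E"
  have "- x = seq_scale sc (-1) x" by (simp add: V.scale_minus_left)
  then show ?thesis using q_scale[OF x, of "-1"] by simp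
qed

lemma q_sym: "x \<in> E \<Longrightarrow> y \<in> E \<Longrightarrow> q (x - y) = q (y - x)"
  by (metis Ediff minus_diff_eq q_neg)

lemma qtri_diff: "x \<in> E \<Longrightarrow> y \<in> E \<Longrightarrow> z \<in> E \<Longrightarrow> q (x - z) \<le> CC * (q (x - y) + q (y - z))"
proof -
  assume a: "x \<in> E" "y \<in> E" "z \<in> E"
  have "x - z = (x - y) + (y - z)" by simp
  then show ?thesis using qtri[of "x - y" "y - z"] a Ediff by simp
qed

lemma seq_scale_apply: "seq_scale sc a x j = sc a (x j)" by (simp add: seq_scale_def)

definition qlim :: "(nat \<Rightarrow> nat \<Rightarrow> 'a) \<Rightarrow> (nat \<Rightarrow> 'a) \<Rightarrow> bool" where
  "qlim u z \<longleftrightarrow> (\<forall>n. u n \<in> E) \<and> z \<in> E \<and> (\<lambda>n. q (u n - z)) \<longlonglongrightarrow> 0"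

lemma zero_le_tendsto:
  fixes g :: "nat \<Rightarrow> real"
  assumes "\<And>n. 0 \<le> f n" "\<And>n. f n \<le> g n" "g \<longlonglongrightarrow> 0"
  shows "f \<longlonglongrightarrow> 0"
  by (rule Lim_null_comparison[OF _ assms(3)]) (use assms in auto)

lemma qlim_unique: "qlim u z \<Longrightarrow> qlim u w \<Longrightarrow> z = w"
proof -
  assume a: "qlim u z" "qlim u w"
  hence E: "\<And>n. u n \<in> E" "z \<in> E" "w \<in> E" by (auto simp: qlim_def)
  have le: "q (z - w) \<le> CC * (q (u n - z) + q (u n - w))" for n
    using qtri_diff[OF E(2) E(1)[of n] E(3)] q_sym[OF E(2) E(1)[of n]] by simp
  have "(\<lambda>n. CC * (q (u n - z) + q (u n - w))) \<longlonglongrightarrow> 0"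
    using a by (intro tendsto_mult_right_zero tendsto_add_zero) (auto simp: qlim_def)
  hence "q (z - w) \<le> 0"
    by (intro tendsto_le[OF _ _ tendsto_const]) (use le in auto)
  hence "q (z - w) = 0" using q_nonneg[OF Ediff[OF E(2,3)]] by simp
  thus ?thesis using q_eq0[OF Ediff[OF E(2,3)]] by simp
qed

lemma qlim_add: "qlim u z \<Longrightarrow> qlim v w \<Longrightarrow> qlim (\<lambda>n. u n + v n) (z + w)"
proof -
  assume a: "qlim u z" "qlim v w"
  hence E: "\<And>n. u n \<in> E" "z \<in> E" "\<And>n. v n \<in> E" "w \<in> E" by (auto simp: qlim_def)
  have eq: "u n + v n - (z + w) = (u n - z) + (v n - w)" for n by simp
  have le: "q (u n + v n - (z + w)) \<le> CC * (q (u n - z) + q (v n - w))" for n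
    unfolding eq by (rule qtri) (use E Ediff in auto)
  have "(\<lambda>n. CC * (q (u n - z) + q (v n - w))) \<longlonglongrightarrow> 0"
    using a by (intro tendsto_mult_right_zero tendsto_add_zero) (auto simp: qlim_def)
  hence "(\<lambda>n. q (u n + v n - (z + w))) \<longlonglongrightarrow> 0"
    by (intro zero_le_tendsto[OF _ le]) (use q_nonneg E Eadd Ediff in auto)
  thus ?thesis using E Eadd by (auto simp: qlim_def)
qed

lemma seq_scale_diff: "seq_scale sc a x - seq_scale sc a y = seq_scale sc a (x - y)"
  by (simp add: V.scale_right_diff_distrib)

lemma qlim_scale: "qlim u z \<Longrightarrow> qlim (\<lambda>n. seq_scale sc a (u n)) (seq_scale sc a z)"
proof -
  assume a: "qlim u z"
  hence E: "\<And>n. u n \<in> E" "z \<in> E" by (auto simp: qlim_def)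
  have "(\<lambda>n. norm a * q (u n - z)) \<longlonglongrightarrow> 0"
    using a by (intro tendsto_mult_right_zero) (auto simp: qlim_def)
  moreover have "q (seq_scale sc a (u n) - seq_scale sc a z) = norm a * q (u n - z)" for n
    unfolding seq_scale_diff using q_scale E Ediff by blast
  ultimately show ?thesis using E Escale by (auto simp: qlim_def)
qed

lemma qlim_const: "z \<in> E \<Longrightarrow> qlim (\<lambda>n. z) z"
  by (simp add: qlim_def q0)

lemma qlim_sum: "finite A \<Longrightarrow> (\<And>i. i \<in> A \<Longrightarrow> qlim (u i) (z i)) \<Longrightarrow> qlim (\<lambda>n. \<Sum>i\<in>A. u i n) (\<Sum>i\<in>A. z i)"
proof (induction A rule: finite_induct)
  case empty
  then show ?case using qlim_const[OF E0] by (simp add: zero_fun_def)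
next
  case (insert x F)
  show ?case unfolding sum.insert[OF insert(1,2)] by (rule qlim_add) (use insert in auto)
qed

lemma qlim_coord: "qlim u z \<Longrightarrow> (\<lambda>n. u n j) \<longlonglongrightarrow> z j"
proof -
  assume a: "qlim u z"
  hence E: "\<And>n. u n \<in> E" "z \<in> E" by (auto simp: qlim_def)
  have "(\<lambda>n. norm (u n j - z j)) \<longlonglongrightarrow> 0"
    apply (rule zero_le_tendsto[of _ "\<lambda>n. q (u n - z)"])
    using a coord_le[OF Ediff[OF E(1) E(2)], of _ j] by (auto simp: qlim_def)
  thus ?thesis by (simp add: LIM_zero_cancel tendsto_norm_zero_iff)
qed

lemma q_sum_bound:
  assumes "\<And>k. v k \<in> E"
  shows "q (\<Sum>k\<in>{m..<m+L}. v k) \<le> (\<Sum>k\<in>{m..<m+L}. CC ^ (k - m + 1) * q (v k))"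
proof (induction L arbitrary: m)
  case 0
  then show ?case by (simp add: q0 q0')
next
  case (Suc L)
  have split: "{m..<m + Suc L} = insert m {Suc m..<Suc m + L}" by auto
  have A: "(\<Sum>k\<in>{m..<m + Suc L}. v k) = v m + (\<Sum>k\<in>{Suc m..<Suc m + L}. v k)"
    unfolding split by simp
  have B: "(\<Sum>k\<in>{m..<m + Suc L}. CC ^ (k - m + 1) * q (v k)) =
      CC * q (v m) + (\<Sum>k\<in>{Suc m..<Suc m + L}. CC ^ (k - m + 1) * q (v k))"
    unfolding split by simp
  have C: "(\<Sum>k\<in>{Suc m..<Suc m + L}. CC ^ (k - m + 1) * q (v k)) =
       CC * (\<Sum>k\<in>{Suc m..<Suc m + L}. CC ^ (k - Suc m + 1) * q (v k))"
    unfolding sum_distrib_left by (rule sum.cong) (auto simp: Suc_diff_Suc)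
  have "q (\<Sum>k\<in>{m..<m + Suc L}. v k) \<le> CC * (q (v m) + q (\<Sum>k\<in>{Suc m..<Suc m + L}. v k))"
    unfolding A by (rule qtri[OF assms Esum]) (rule assms)
  also have "\<dots> \<le> CC * (q (v m) + (\<Sum>k\<in>{Suc m..<Suc m + L}. CC ^ (k - Suc m + 1) * q (v k)))"
    using Suc.IH[of "Suc m"] CC1 by (intro mult_left_mono) auto
  also have "\<dots> = (\<Sum>k\<in>{m..<m + Suc L}. CC ^ (k - m + 1) * q (v k))"
    unfolding B C by (simp add: algebra_simps)
  finally show ?case .
qed

end


context qb begin

lemma spanE: "S \<subseteq> E \<Longrightarrow> V.span S \<subseteq> E"
  using V.span_minimal subE by blast

lemma inv_Suc_tendsto: "(\<lambda>n. inverse (real (Suc n))) \<longlonglongrightarrow> 0"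
  by (rule LIMSEQ_inverse_real_of_nat)

lemma dist_pre:
  assumes ME: "M \<subseteq> E" and sM: "V.subspace M" and cM: "closed_in_qnorm E q M"
    and v: "v \<in> E" "v \<notin> M"
  shows "\<exists>d>0. \<forall>m\<in>M. \<forall>a. q (seq_scale sc a v + m) \<ge> norm a * d"
proof -
  have "\<exists>d>0. \<forall>m\<in>M. q (v - m) \<ge> d"
  proof (rule ccontr)
    assume "\<not> ?thesis"
    hence "\<forall>n. \<exists>m\<in>M. q (v - m) < inverse (real (Suc n))"
      by (metis not_le of_nat_0_less_iff positive_imp_inverse_positive zero_less_Suc)
    then obtain m where m: "\<And>n. m n \<in> M" "\<And>n. q (v - m n) < inverse (real (Suc n))"
      by metis
    have "(\<lambda>n. q (m n - v)) \<longlonglongrightarrow> 0"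
      apply (rule zero_le_tendsto[OF _ _ inv_Suc_tendsto])
      using q_nonneg Ediff ME m v(1) q_sym less_imp_le by (metis subsetD)+
    hence "v \<in> M" using cM m(1) v(1) unfolding closed_in_qnorm_def by blast
    thus False using v by blast
  qed
  then obtain d where d: "d > 0" "\<And>m. m \<in> M \<Longrightarrow> q (v - m) \<ge> d" by blast
  have "q (seq_scale sc a v + m) \<ge> norm a * d" if m: "m \<in> M" for m a
  proof (cases "a = 0")
    case True
    then show ?thesis using q_nonneg ME m by (auto simp: V.scale_zero_left)
  next
    case False
    let ?m' = "- seq_scale sc (inverse a) m"
    have m': "?m' \<in> M" using m sM V.subspace_neg V.subspace_scale by blast
    have eq: "seq_scale sc a v + m = seq_scale sc a (v - ?m')"
      using False by (simp add: V.scale_right_distrib)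
    have "q (seq_scale sc a v + m) = norm a * q (v - ?m')"
      unfolding eq by (rule q_scale, rule Ediff[OF v(1)]) (use m' ME in auto)
    also have "\<dots> \<ge> norm a * d" using d(2)[OF m'] by (simp add: mult_left_mono)
    finally show ?thesis by simp
  qed
  thus ?thesis using d(1) by blast
qed

lemma sc_tendsto: "(b \<longlonglongrightarrow> \<beta>) \<Longrightarrow> (\<lambda>n. sc (b n) w) \<longlonglongrightarrow> sc \<beta> w"
proof -
  assume b: "b \<longlonglongrightarrow> \<beta>"
  have "(\<lambda>n. norm (b n - \<beta>) * norm w) \<longlonglongrightarrow> 0 * norm w"
    using b by (intro tendsto_intros) (simp add: tendsto_norm_zero_iff LIM_zero)
  hence "(\<lambda>n. norm (sc (b n) w - sc \<beta> w)) \<longlonglongrightarrow> 0"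
    by (simp add: norm_sc S.scale_left_diff_distrib[symmetric])
  thus ?thesis by (simp add: LIM_zero_cancel tendsto_norm_zero_iff)
qed

lemma q_scale_tendsto:
  assumes b: "b \<longlonglongrightarrow> \<beta>" and v: "v \<in> E"
  shows "(\<lambda>n. q (seq_scale sc (b n) v - seq_scale sc \<beta> v)) \<longlonglongrightarrow> 0"
proof -
  have eq: "seq_scale sc (b n) v - seq_scale sc \<beta> v = seq_scale sc (b n - \<beta>) v" for n
    by (simp add: V.scale_left_diff_distrib)
  have "(\<lambda>n. norm (b n - \<beta>) * q v) \<longlonglongrightarrow> 0 * q v"
    using b by (intro tendsto_intros) (simp add: tendsto_norm_zero_iff LIM_zero)
  thus ?thesis unfolding eq using q_scale[OF v] by simp
qed

lemma span_closed:
  assumes "finite S" "S \<subseteq> E"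
  shows "closed_in_qnorm E q (V.span S)"
  using assms
proof (induction S rule: finite_induct)
  case empty
  show ?case unfolding closed_in_qnorm_def
  proof (intro allI impI)
    fix u z assume a: "(\<forall>n. u n \<in> V.span {}) \<and> z \<in> E \<and> (\<lambda>n. q (u n - z)) \<longlonglongrightarrow> 0"
    have "(\<lambda>n. q (u n - z)) = (\<lambda>n. q (- z))" using a by auto
    hence "(\<lambda>n. q (- z)) \<longlonglongrightarrow> 0" using a by metis
    hence "q (- z) = 0" by (simp add: LIMSEQ_const_iff)
    hence "z = 0" using q_neg q_eq0 a by metis
    thus "z \<in> V.span {}" by simp
  qed
next
  case (insert v T)
  have TE: "T \<subseteq> E" and vE: "v \<in> E" using insert by auto
  have IH: "closed_in_qnorm E q (V.span T)" using insert TE by auto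
  show ?case
  proof (cases "v \<in> V.span T")
    case True
    then show ?thesis using IH V.span_redundant by simp
  next
    case False
    obtain d where d: "d > 0" "\<And>m a. m \<in> V.span T \<Longrightarrow> q (seq_scale sc a v + m) \<ge> norm a * d"
      using dist_pre[OF spanE[OF TE] V.subspace_span IH vE False] by blast
    show ?thesis unfolding closed_in_qnorm_def
    proof (intro allI impI)
      fix u z assume a: "(\<forall>n. u n \<in> V.span (insert v T)) \<and> z \<in> E \<and> (\<lambda>n. q (u n - z)) \<longlonglongrightarrow> 0"
      hence z: "z \<in> E" and uz: "(\<lambda>n. q (u n - z)) \<longlonglongrightarrow> 0" by auto
      have uE: "u n \<in> E" for n using a spanE[of "insert v T"] insert by auto
      have "\<forall>n. \<exists>k. u n - seq_scale sc k v \<in> V.span T" using a V.span_insert by auto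
      then obtain b where b: "\<And>n. u n - seq_scale sc (b n) v \<in> V.span T" by metis
      define m where "m n = u n - seq_scale sc (b n) v" for n
      have mT: "m n \<in> V.span T" for n using b m_def by simp
      have mE: "m n \<in> E" for n using mT spanE[OF TE] by auto
      have bd: "norm (b n - b k) * d \<le> CC * (q (u n - z) + q (u k - z))" for n k
      proof -
        have "u n - u k = seq_scale sc (b n - b k) v + (m n - m k)"
          by (simp add: m_def V.scale_left_diff_distrib algebra_simps)
        hence "norm (b n - b k) * d \<le> q (u n - u k)"
          using d(2)[of "m n - m k" "b n - b k"] mT V.span_diff by metis
        also have "\<dots> \<le> CC * (q (u n - z) + q (z - u k))" by (rule qtri_diff) (use uE z in auto)
        also have "q (z - u k) = q (u k - z)" using q_sym uE z by auto
        finally show ?thesis .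
      qed
      have "Cauchy b"
      proof (rule CauchyI)
        fix e :: real assume e: "e > 0"
        have "eventually (\<lambda>n. q (u n - z) < e * d / (2 * CC)) sequentially"
          using uz e d(1) CC1 by (intro order_tendstoD) auto
        then obtain N where N: "\<And>n. n \<ge> N \<Longrightarrow> q (u n - z) < e * d / (2 * CC)"
          by (auto simp: eventually_sequentially)
        have "norm (b n - b k) < e" if "n \<ge> N" "k \<ge> N" for n k
        proof -
          have "norm (b n - b k) * d \<le> CC * (q (u n - z) + q (u k - z))" by (rule bd)
          also have "\<dots> < CC * (e * d / (2 * CC) + e * d / (2 * CC))"
            using N that CC1 by (intro mult_strict_left_mono add_strict_mono) auto
          also have "\<dots> = e * d" using CC1 by (simp add: field_simps)
          finally show ?thesis using d(1) by simp
        qed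
        thus "\<exists>M. \<forall>m\<ge>M. \<forall>n\<ge>M. norm (b m - b n) < e" by blast
      qed
      then obtain \<beta> where \<beta>: "b \<longlonglongrightarrow> \<beta>" using Cauchy_convergent_iff convergent_def by blast
      let ?w = "z - seq_scale sc \<beta> v"
      have wE: "?w \<in> E" using z vE Ediff Escale by auto
      have eqm: "m n - ?w = (u n - z) + - (seq_scale sc (b n) v - seq_scale sc \<beta> v)" for n
        by (simp add: m_def algebra_simps)
      have le: "q (m n - ?w) \<le> CC * (q (u n - z) + q (seq_scale sc (b n) v - seq_scale sc \<beta> v))" for n
        unfolding eqm using qtri[of "u n - z" "- (seq_scale sc (b n) v - seq_scale sc \<beta> v)"]
          q_neg[of "seq_scale sc (b n) v - seq_scale sc \<beta> v"] uE z vE Ediff Escale Eneg by metis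
      have T0: "(\<lambda>n. CC * (q (u n - z) + q (seq_scale sc (b n) v - seq_scale sc \<beta> v))) \<longlonglongrightarrow> 0"
        by (intro tendsto_mult_right_zero tendsto_add_zero uz q_scale_tendsto[OF \<beta> vE])
      have "(\<lambda>n. q (m n - ?w)) \<longlonglongrightarrow> 0"
        by (rule zero_le_tendsto[OF _ le T0]) (use q_nonneg Ediff mE wE in auto)
      hence "?w \<in> V.span T" using IH mT wE unfolding closed_in_qnorm_def by blast
      thus "z \<in> V.span (insert v T)" using V.span_insert by auto
    qed
  qed
qed

lemma dist_span:
  assumes "finite S" "S \<subseteq> E" "v \<in> E" "v \<notin> V.span S"
  shows "\<exists>d>0. \<forall>m\<in>V.span S. \<forall>a. q (seq_scale sc a v + m) \<ge> norm a * d"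
  by (rule dist_pre[OF spanE[OF assms(2)] V.subspace_span span_closed[OF assms(1,2)] assms(3,4)])

end


lemma inj_lepoll_UNIV: "inj f \<Longrightarrow> (UNIV :: 'x set) \<lesssim> (UNIV :: 'y set)" for f :: "'x \<Rightarrow> 'y"
  unfolding lepoll_def by blast

lemma fun_real_lepoll_real: "(UNIV :: (nat \<Rightarrow> real) set) \<lesssim> (UNIV :: real set)"
proof -
  have "(UNIV :: real set) \<approx> (UNIV :: nat set set)"
    using nat_sets_eqpoll_reals eqpoll_sym by blast
  then obtain f1 :: "real \<Rightarrow> nat set" where f1: "inj f1"
    unfolding eqpoll_def bij_betw_def by blast
  obtain f2 :: "nat set \<Rightarrow> real" where f2: "inj f2"
    using nat_sets_eqpoll_reals unfolding eqpoll_def bij_betw_def by blast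
  define F where "F u = f2 {prod_encode (i, j) | i j. j \<in> f1 (u i)}" for u :: "nat \<Rightarrow> real"
  have "inj F"
  proof (rule injI)
    fix u v assume "F u = F v"
    hence eq: "{prod_encode (i, j) | i j. j \<in> f1 (u i)} = {prod_encode (i, j) | i j. j \<in> f1 (v i)}"
      using f2 unfolding F_def inj_def by blast
    have "j \<in> f1 (u i) \<longleftrightarrow> j \<in> f1 (v i)" for i j
    proof -
      have "j \<in> f1 (u i) \<longleftrightarrow> prod_encode (i, j) \<in> {prod_encode (i, j) | i j. j \<in> f1 (u i)}"
        by (auto simp: prod_encode_eq)
      also have "\<dots> \<longleftrightarrow> prod_encode (i, j) \<in> {prod_encode (i, j) | i j. j \<in> f1 (v i)}" using eq by simp
      also have "\<dots> \<longleftrightarrow> j \<in> f1 (v i)" by (auto simp: prod_encode_eq)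
      finally show ?thesis .
    qed
    hence "f1 (u i) = f1 (v i)" for i by blast
    thus "u = v" using f1 by (auto simp: inj_def fun_eq_iff)
  qed
  thus ?thesis by (rule inj_lepoll_UNIV)
qed

lemma eucl_inj_fun:
  obtains emb :: "'k::euclidean_space \<Rightarrow> nat \<Rightarrow> real" where "inj emb"
proof -
  obtain xs where xs: "set xs = (Basis :: 'k set)" using finite_list finite_Basis by blast
  define emb where "emb k = (\<lambda>i. if i < length xs then k \<bullet> (xs ! i) else 0)" for k :: 'k
  have "inj emb"
  proof (rule injI)
    fix a b assume "emb a = emb b"
    hence "a \<bullet> (xs ! i) = b \<bullet> (xs ! i)" if "i < length xs" for i
      using that unfolding emb_def by (metis (full_types))
    hence "a \<bullet> v = b \<bullet> v" if "v \<in> Basis" for v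
      using that xs by (metis in_set_conv_nth)
    thus "a = b" by (rule euclidean_eqI)
  qed
  thus ?thesis using that by blast
qed

lemma card_domain_le_real: "(UNIV :: (nat \<Rightarrow> nat \<Rightarrow> 'k::euclidean_space) set) \<lesssim> (UNIV :: real set)"
proof -
  obtain emb :: "'k \<Rightarrow> nat \<Rightarrow> real" where emb: "inj emb" by (rule eucl_inj_fun)
  define H where "H h = (\<lambda>m. case prod_decode m of (n, r) \<Rightarrow> case prod_decode r of (i, j) \<Rightarrow> emb (h n i) j)"
    for h :: "nat \<Rightarrow> nat \<Rightarrow> 'k"
  have "inj H"
  proof (rule injI)
    fix h h' assume eq: "H h = H h'"
    have "emb (h n i) j = emb (h' n i) j" for n i j
      using fun_cong[OF eq, of "prod_encode (n, prod_encode (i, j))"] by (simp add: H_def)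
    hence "h n i = h' n i" for n i using emb by (auto simp: inj_def fun_eq_iff)
    thus "h = h'" by (auto simp: fun_eq_iff)
  qed
  hence "(UNIV :: (nat \<Rightarrow> nat \<Rightarrow> 'k) set) \<lesssim> (UNIV :: (nat \<Rightarrow> real) set)" by (rule inj_lepoll_UNIV)
  thus ?thesis using fun_real_lepoll_real lepoll_trans by blast
qed

lemma cancel_h1: "(c::real) \<noteq> 0 \<Longrightarrow> e \<noteq> 0 \<Longrightarrow> C \<noteq> 0 \<Longrightarrow> C * (a / (2*C*c*e) * c) = a / e * (1/2)"
  by (simp add: field_simps)
lemma cancel_h2: "(c::real) \<noteq> 0 \<Longrightarrow> e \<noteq> 0 \<Longrightarrow> C \<noteq> 0 \<Longrightarrow>
   C ^ Suc (Suc j) * (a * dd / (2*C*c*e) * c) = C ^ Suc j * a * (dd/(2*e))"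
  by (simp add: field_simps)
lemma div_le1_h: "(X::real) \<ge> 1 \<Longrightarrow> 0 < dd \<Longrightarrow> dd \<le> 1 \<Longrightarrow> dd / X \<le> 1"
  by (simp add: divide_le_eq)

fun epsf :: "(nat \<Rightarrow> real) \<Rightarrow> (nat \<Rightarrow> real) \<Rightarrow> real \<Rightarrow> nat \<Rightarrow> real" where
  "epsf d Q C 0 = 1"
| "epsf d Q C (Suc k) = epsf d Q C k * d k / (2 * C * (1 + Q (Suc k)) * real (Suc k))"

declare epsf.simps(2)[simp del]

lemma epsf_pos:
  assumes "\<And>n. d n > 0" "\<And>n. Q n \<ge> 0" "C \<ge> 1"
  shows "epsf d Q C k > 0"
  by (induction k) (use assms in \<open>auto simp: epsf.simps intro!: divide_pos_pos mult_pos_pos add_pos_nonneg\<close>)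

lemma epsf_le1:
  assumes "\<And>n. d n > 0" "\<And>n. d n \<le> 1" "\<And>n. Q n \<ge> 0" "C \<ge> 1"
  shows "epsf d Q C k \<le> 1"
proof (induction k)
  case 0
  then show ?case by simp
next
  case (Suc k)
  have pos: "epsf d Q C k > 0" using epsf_pos assms by blast
  have "d k / (2 * C * (1 + Q (Suc k)) * real (Suc k)) \<le> 1"
  proof -
    have "1 \<le> 2 * C * (1 + Q (Suc k)) * real (Suc k)"
    proof -
      have "1 \<le> 2 * C" using assms by simp
      also have "\<dots> \<le> 2 * C * (1 + Q (Suc k))" using assms(3)[of "Suc k"] assms(4) by simp
      also have "\<dots> \<le> 2 * C * (1 + Q (Suc k)) * real (Suc k)"
        using mult_left_mono[of 1 "real (Suc k)" "2*C*(1+Q(Suc k))"] assms(3)[of "Suc k"] assms(4) by simp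
      finally show ?thesis .
    qed
    thus ?thesis using assms(1,2)[of k] by (rule div_le1_h)
  qed
  hence "epsf d Q C (Suc k) \<le> epsf d Q C k" using pos
    by (simp add: epsf.simps mult_left_le times_divide_eq_right[symmetric] del: times_divide_eq_right)
  then show ?case using Suc by simp
qed

lemma epsf_bound:
  assumes "\<And>n. d n > 0" "\<And>n. d n \<le> 1" "\<And>n. Q n \<ge> 0" "C \<ge> 1"
  shows "C ^ (Suc j) * (epsf d Q C (Suc m + j) * (1 + Q (Suc m + j))) \<le>
          epsf d Q C m * d m / real (Suc m) * (1/2) ^ (Suc j)"
proof (induction j)
  case 0
  have nz: "1 + Q (Suc m) \<noteq> 0" "real (Suc m) \<noteq> 0" "C \<noteq> 0" using assms(3)[of "Suc m"] assms(4) by auto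
  have "C * (epsf d Q C (Suc m) * (1 + Q (Suc m))) = epsf d Q C m * d m / real (Suc m) * (1/2)"
    using nz unfolding epsf.simps by (rule cancel_h1)
  then show ?case by simp
next
  case (Suc j)
  let ?k = "Suc m + j"
  have pos: "epsf d Q C ?k > 0" using epsf_pos assms by blast
  have A: "C ^ Suc (Suc j) * (epsf d Q C (Suc ?k) * (1 + Q (Suc ?k)))
      = C ^ Suc j * epsf d Q C ?k * (d ?k / (2 * real (Suc ?k)))"
  proof -
    have nz: "1 + Q (Suc ?k) \<noteq> 0" "real (Suc ?k) \<noteq> 0" "C \<noteq> 0" using assms(3)[of "Suc ?k"] assms(4) by auto
    show ?thesis using nz unfolding epsf.simps by (rule cancel_h2)
  qed
  have "d ?k / (2 * real (Suc ?k)) \<le> 1/2" using assms(1,2)[of ?k] by (simp add: field_simps)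
  hence "C ^ Suc j * epsf d Q C ?k * (d ?k / (2 * real (Suc ?k))) \<le> C ^ Suc j * epsf d Q C ?k * (1/2)"
    using pos assms(4) by (intro mult_left_mono) (auto intro: less_imp_le)
  also have "\<dots> \<le> C ^ Suc j * (epsf d Q C ?k * (1 + Q ?k)) * (1/2)"
    using pos assms(4) assms(3)[of ?k] by (simp add: field_simps)
  also have "\<dots> \<le> epsf d Q C m * d m / real (Suc m) * (1/2) ^ Suc j * (1/2)"
    using Suc.IH by (intro mult_right_mono) auto
  finally have F: "C ^ Suc (Suc j) * (epsf d Q C (Suc ?k) * (1 + Q (Suc ?k))) \<le>
      epsf d Q C m * d m / real (Suc m) * (1/2) ^ Suc j * (1/2)" unfolding A .
  have e1: "Suc m + Suc j = Suc ?k" by simp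
  have e2: "(1/2::real) ^ Suc j * (1/2) = (1/2)^Suc(Suc j)" by simp
  show ?case unfolding e1 using F by (simp only: mult.assoc e2)
qed

lemma geom_half_sum: "(\<Sum>k\<in>{Suc m..<Suc m + L}. (1/2::real) ^ (k - m)) = 1 - (1/2) ^ L"
proof (induction L)
  case 0
  then show ?case by simp
next
  case (Suc L)
  have "{Suc m..<Suc m + Suc L} = insert (Suc m + L) {Suc m..<Suc m + L}" by auto
  hence "(\<Sum>k\<in>{Suc m..<Suc m + Suc L}. (1/2::real) ^ (k - m)) =
      (1/2) ^ (Suc L) + (\<Sum>k\<in>{Suc m..<Suc m + L}. (1/2::real) ^ (k - m))" by simp
  then show ?case using Suc by simp
qed



locale gl = qb +
  fixes g :: "nat \<Rightarrow> nat \<Rightarrow> 'b"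
  assumes gE: "\<And>n. g n \<in> E" and gind: "\<And>n. g n \<notin> V.span (g ` {..<n})"
begin

lemma gimgE: "g ` A \<subseteq> E" using gE by auto

definition dd where "dd n = (SOME d. 0 < d \<and> d \<le> 1 \<and>
   (\<forall>m\<in>V.span (g ` {..<n}). \<forall>a. q (seq_scale sc a (g n) + m) \<ge> norm a * d))"

lemma dd: "0 < dd n \<and> dd n \<le> 1 \<and>
   (\<forall>m\<in>V.span (g ` {..<n}). \<forall>a. q (seq_scale sc a (g n) + m) \<ge> norm a * dd n)"
proof -
  obtain d where d: "d > 0" "\<forall>m\<in>V.span (g ` {..<n}). \<forall>a. q (seq_scale sc a (g n) + m) \<ge> norm a * d"
    using dist_span[OF finite_imageI[OF finite_lessThan] gimgE gE gind] by blast
  have "\<forall>m\<in>V.span (g ` {..<n}). \<forall>a. q (seq_scale sc a (g n) + m) \<ge> norm a * min 1 d"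
    using d by (meson min.cobounded2 mult_left_mono norm_ge_zero order_trans)
  hence "\<exists>d. 0 < d \<and> d \<le> 1 \<and>
   (\<forall>m\<in>V.span (g ` {..<n}). \<forall>a. q (seq_scale sc a (g n) + m) \<ge> norm a * d)"
    using d(1) by (intro exI[of _ "min 1 d"]) auto
  thus ?thesis unfolding dd_def by (rule someI_ex)
qed

lemma dd_pos: "0 < dd n" and dd_le1: "dd n \<le> 1" using dd by auto
lemma dd_bound: "m \<in> V.span (g ` {..<n}) \<Longrightarrow> q (seq_scale sc a (g n) + m) \<ge> norm a * dd n"
  using dd by blast

definition QQ where "QQ n = q (g n)"
lemma QQ_nonneg: "QQ n \<ge> 0" unfolding QQ_def using q_nonneg gE by auto

definition eps where "eps = epsf dd QQ CC"
lemma eps_pos: "eps k > 0" unfolding eps_def using epsf_pos dd_pos QQ_nonneg CC1 by blast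
lemma eps_le1: "eps k \<le> 1" unfolding eps_def using epsf_le1 dd_pos dd_le1 QQ_nonneg CC1 by blast
lemma eps_bound: "CC ^ (Suc j) * (eps (Suc m + j) * (1 + QQ (Suc m + j))) \<le>
          eps m * dd m / real (Suc m) * (1/2) ^ (Suc j)"
  unfolding eps_def using epsf_bound dd_pos dd_le1 QQ_nonneg CC1 by blast

lemma tailb:
  assumes c: "\<And>k. k \<ge> Suc m \<Longrightarrow> norm (c k) \<le> B * eps k" and B: "B \<ge> 0"
  shows "q (\<Sum>k\<in>{Suc m..<Suc m + L}. seq_scale sc (c k) (g k)) \<le> B * eps m * dd m / real (Suc m)"
proof -
  let ?R = "eps m * dd m / real (Suc m)"
  have "q (\<Sum>k\<in>{Suc m..<Suc m + L}. seq_scale sc (c k) (g k)) \<le>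
      (\<Sum>k\<in>{Suc m..<Suc m + L}. CC ^ (k - Suc m + 1) * q (seq_scale sc (c k) (g k)))"
    by (rule q_sum_bound) (use Escale gE in auto)
  also have "\<dots> \<le> (\<Sum>k\<in>{Suc m..<Suc m + L}. B * ?R * (1/2) ^ (k - m))"
  proof (rule sum_mono)
    fix k assume k: "k \<in> {Suc m..<Suc m + L}"
    define j where "j = k - Suc m"
    have kj: "k = Suc m + j" using k j_def by auto
    have "CC ^ (k - Suc m + 1) * q (seq_scale sc (c k) (g k)) = CC ^ Suc j * (norm (c k) * QQ k)"
      using q_scale[OF gE] by (simp add: QQ_def j_def)
    also have "\<dots> \<le> CC ^ Suc j * (B * eps k * (1 + QQ k))"
      using c[of k] k QQ_nonneg[of k] CC1 B eps_pos[of k]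
      by (intro mult_left_mono mult_mono) auto
    also have "\<dots> = B * (CC ^ Suc j * (eps (Suc m + j) * (1 + QQ (Suc m + j))))" using kj by simp
    also have "\<dots> \<le> B * (?R * (1/2) ^ Suc j)" using eps_bound B by (intro mult_left_mono) auto
    also have "Suc j = k - m" using kj by simp
    finally show "CC ^ (k - Suc m + 1) * q (seq_scale sc (c k) (g k)) \<le> B * ?R * (1/2) ^ (k - m)"
      by (simp add: mult_ac)
  qed
  also have "\<dots> = B * ?R * (1 - (1/2) ^ L)" by (simp only: sum_distrib_left[symmetric] geom_half_sum)
  also have "\<dots> \<le> B * ?R"
    using B eps_pos[of m] dd_pos[of m] by (intro mult_left_le) (auto intro!: mult_nonneg_nonneg)
  finally show ?thesis by simp
qed

definition SS :: "nat \<Rightarrow> real \<Rightarrow> (nat \<Rightarrow> 'b)" where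
  "SS N t = (\<Sum>k<N. seq_scale sc (of_real (eps k * t ^ k)) (g k))"

lemma S_span: "SS N t \<in> V.span (range g)"
  unfolding SS_def by (intro V.span_sum V.span_scale V.span_base) auto

lemma S_E: "SS N t \<in> E" using S_span spanE[of "range g"] gimgE by blast

lemma S_diff: "SS (Suc m + L) t - SS (Suc m) t = (\<Sum>k\<in>{Suc m..<Suc m + L}. seq_scale sc (of_real (eps k * t ^ k)) (g k))"
proof -
  have "SS (Suc m + L) t = SS (Suc m) t + (\<Sum>k\<in>{Suc m..<Suc m + L}. seq_scale sc (of_real (eps k * t ^ k)) (g k))"
    unfolding SS_def lessThan_atLeast0 by (rule sum.atLeastLessThan_concat[symmetric]) auto
  thus ?thesis by simp
qed

lemma S_cauchy_bound:
  assumes t: "0 \<le> t" "t \<le> 1" and NN: "Suc m \<le> N"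
  shows "q (SS N t - SS (Suc m) t) \<le> 1 / real (Suc m)"
proof -
  obtain L where L: "N = Suc m + L" using NN le_Suc_ex by blast
  have "q (SS N t - SS (Suc m) t) \<le> 1 * eps m * dd m / real (Suc m)"
    unfolding L S_diff
  proof (rule tailb)
    fix k
    have "t ^ k \<le> 1" using t by (simp add: power_le_one)
    have "norm (of_real (eps k * t ^ k) :: 'a) = eps k * t ^ k"
      by (simp only: norm_of_real) (use eps_pos[of k] t in simp)
    thus "norm (of_real (eps k * t ^ k) :: 'a) \<le> 1 * eps k"
      using eps_pos[of k] \<open>t ^ k \<le> 1\<close> by (simp add: mult_left_le)
  qed simp
  also have "\<dots> \<le> 1 / real (Suc m)"
    using eps_le1[of m] dd_le1[of m] eps_pos[of m] dd_pos[of m]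
    by (intro divide_right_mono) (auto simp: mult_le_one)
  finally show ?thesis .
qed

lemma S_conv:
  assumes t: "0 \<le> t" "t \<le> 1"
  shows "\<exists>z\<in>E. (\<lambda>N. q (SS N t - z)) \<longlonglongrightarrow> 0"
proof (rule q_complete)
  show "\<forall>n. SS n t \<in> E" using S_E by auto
  show "\<forall>e>0. \<exists>N. \<forall>m\<ge>N. \<forall>n\<ge>N. q (SS m t - SS n t) < e"
  proof (intro allI impI)
    fix e :: real assume e: "e > 0"
    obtain M where M: "inverse (real (Suc M)) < e" using reals_Archimedean e by blast
    have "q (SS a t - SS b t) < e" if "a \<ge> Suc M" "b \<ge> Suc M" for a b
    proof -
      have gen: "q (SS a t - SS b t) < e" if ab: "b \<le> a" "b \<ge> Suc M" for a b
      proof -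
        obtain m where m: "b = Suc m" using ab by (cases b) auto
        have "q (SS a t - SS b t) \<le> 1 / real (Suc m)" unfolding m by (rule S_cauchy_bound) (use t ab m in auto)
        also have "\<dots> \<le> 1 / real (Suc M)" using ab m by (intro divide_left_mono) auto
        also have "\<dots> < e" using M by (simp add: field_simps)
        finally show ?thesis .
      qed
      show ?thesis
      proof (cases "b \<le> a")
        case True then show ?thesis using gen that by blast
      next
        case False
        hence "q (SS b t - SS a t) < e" using gen that by auto
        thus ?thesis using q_sym S_E by metis
      qed
    qed
    thus "\<exists>N. \<forall>m\<ge>N. \<forall>n\<ge>N. q (SS m t - SS n t) < e" by blast
  qed
qed

definition z :: "real \<Rightarrow> (nat \<Rightarrow> 'b)" where
  "z t = (SOME z. z \<in> E \<and> (\<lambda>N. q (SS N t - z)) \<longlonglongrightarrow> 0)"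

lemma z: assumes "0 \<le> t" "t \<le> 1" shows "z t \<in> E" "(\<lambda>N. q (SS N t - z t)) \<longlonglongrightarrow> 0"
proof -
  have "\<exists>z. z \<in> E \<and> (\<lambda>N. q (SS N t - z)) \<longlonglongrightarrow> 0" using S_conv[OF assms] by blast
  hence "z t \<in> E \<and> (\<lambda>N. q (SS N t - z t)) \<longlonglongrightarrow> 0" unfolding z_def by (rule someI_ex)
  thus "z t \<in> E" "(\<lambda>N. q (SS N t - z t)) \<longlonglongrightarrow> 0" by auto
qed

lemma z_qlim: "0 \<le> t \<Longrightarrow> t \<le> 1 \<Longrightarrow> qlim (\<lambda>N. SS N t) (z t)"
  using z S_E by (auto simp: qlim_def)

end


lemma div_cancel_h: "(x::real) \<noteq> 0 \<Longrightarrow> e \<noteq> 0 \<Longrightarrow> (A * x / e) / x = A * inverse e"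
  by (simp add: field_simps)

context gl begin

lemma sumcomb:
  "(\<Sum>t\<in>T. seq_scale sc (c t) (SS N t)) =
   (\<Sum>k<N. seq_scale sc (of_real (eps k) * (\<Sum>t\<in>T. c t * of_real (t ^ k))) (g k))"
proof -
  have "(\<Sum>t\<in>T. seq_scale sc (c t) (SS N t)) =
      (\<Sum>t\<in>T. \<Sum>k<N. seq_scale sc (c t * of_real (eps k * t ^ k)) (g k))"
    unfolding SS_def by (simp add: V.scale_sum_right)
  also have "\<dots> = (\<Sum>k<N. \<Sum>t\<in>T. seq_scale sc (c t * of_real (eps k * t ^ k)) (g k))"
    by (rule sum.swap)
  also have "\<dots> = (\<Sum>k<N. seq_scale sc (\<Sum>t\<in>T. c t * of_real (eps k * t ^ k)) (g k))"
    by (simp add: V.scale_sum_left)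
  also have "\<dots> = (\<Sum>k<N. seq_scale sc (of_real (eps k) * (\<Sum>t\<in>T. c t * of_real (t ^ k))) (g k))"
    by (simp add: sum_distrib_left of_real_mult mult_ac)
  finally show ?thesis .
qed

lemma indep_core:
  assumes T: "finite T" "T \<subseteq> {0<..<1}" and y0: "(\<Sum>t\<in>T. seq_scale sc (c t) (z t)) = 0"
  shows "\<forall>t\<in>T. c t = 0"
proof (rule ccontr)
  assume "\<not> (\<forall>t\<in>T. c t = 0)"
  define T' where "T' = {t\<in>T. c t \<noteq> 0}"
  have T'ne: "T' \<noteq> {}" using \<open>\<not> (\<forall>t\<in>T. c t = 0)\<close> T'_def by auto
  have fT': "finite T'" using T T'_def by auto
  have T'T: "T' \<subseteq> T" using T'_def by auto
  define t1 where "t1 = Max T'"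
  have t1: "t1 \<in> T'" "\<And>t. t \<in> T' \<Longrightarrow> t \<le> t1"
    using Max_in[OF fT' T'ne] Max_ge[OF fT'] t1_def by auto
  have t1pos: "0 < t1" "t1 < 1" using t1(1) T'T T(2) by auto
  have T'pos: "\<And>t. t \<in> T' \<Longrightarrow> 0 < t" using T'T T(2) by auto
  define p where "p k = (\<Sum>t\<in>T. c t * of_real (t ^ k))" for k
  have p': "p k = (\<Sum>t\<in>T'. c t * of_real (t ^ k))" for k
    unfolding p_def T'_def by (rule sum.mono_neutral_right) (use T in auto)
  define P where "P = (\<Sum>t\<in>T'. norm (c t))"
  have P0: "P \<ge> 0" unfolding P_def by (intro sum_nonneg) auto
  have pb: "norm (p k) \<le> P * t1 ^ k" for k
  proof -
    have "norm (p k) \<le> (\<Sum>t\<in>T'. norm (c t * of_real (t ^ k)))" unfolding p' by (rule norm_sum)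
    also have "\<dots> \<le> (\<Sum>t\<in>T'. norm (c t) * t1 ^ k)"
    proof (rule sum_mono)
      fix t assume t: "t \<in> T'"
      have "norm (c t * of_real (t ^ k)) = norm (c t) * t ^ k"
        using T'pos[OF t] by (simp add: norm_mult norm_power)
      also have "\<dots> \<le> norm (c t) * t1 ^ k"
        using T'pos[OF t] t1(2)[OF t] by (intro mult_left_mono power_mono) auto
      finally show "norm (c t * of_real (t ^ k)) \<le> norm (c t) * t1 ^ k" .
    qed
    also have "\<dots> = P * t1 ^ k" unfolding P_def by (simp add: sum_distrib_right)
    finally show ?thesis .
  qed
  define b where "b k = of_real (eps k) * p k" for k
  define sN where "sN N = (\<Sum>k<N. seq_scale sc (b k) (g k))" for N
  have sN_eq: "(\<Sum>t\<in>T. seq_scale sc (c t) (SS N t)) = sN N" for N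
    unfolding sN_def b_def p_def by (rule sumcomb)
  have sNE: "sN N \<in> E" for N unfolding sN_def by (intro Esum Escale gE)
  have "qlim (\<lambda>N. \<Sum>t\<in>T. seq_scale sc (c t) (SS N t)) (\<Sum>t\<in>T. seq_scale sc (c t) (z t))"
    by (intro qlim_sum qlim_scale z_qlim T(1)) (use T(2) in auto)
  hence lim: "qlim sN 0" unfolding sN_eq y0 .
  hence lim0: "(\<lambda>N. q (sN N)) \<longlonglongrightarrow> 0" by (simp add: qlim_def)
  have key: "norm (p m) \<le> CC * P * t1 ^ m / real (Suc m)" for m
  proof -
    have sS: "sN (Suc m) = seq_scale sc (b m) (g m) + sN m" unfolding sN_def by (simp add: add.commute)
    have sm: "sN m \<in> V.span (g ` {..<m})" unfolding sN_def
      by (intro V.span_sum V.span_scale V.span_base) auto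
    have a: "norm (b m) * dd m \<le> q (sN (Suc m))" unfolding sS by (rule dd_bound[OF sm])
    define R where "R = P * t1 ^ m * eps m * dd m / real (Suc m)"
    have tail: "q (sN (Suc m + L) - sN (Suc m)) \<le> R" for L
    proof -
      have "sN (Suc m + L) = sN (Suc m) + (\<Sum>k\<in>{Suc m..<Suc m + L}. seq_scale sc (b k) (g k))"
        unfolding sN_def lessThan_atLeast0 by (rule sum.atLeastLessThan_concat[symmetric]) auto
      hence eq: "sN (Suc m + L) - sN (Suc m) = (\<Sum>k\<in>{Suc m..<Suc m + L}. seq_scale sc (b k) (g k))" by simp
      show ?thesis unfolding eq R_def
      proof (rule tailb)
        fix k assume k: "Suc m \<le> k"
        have "norm (b k) = eps k * norm (p k)" unfolding b_def using eps_pos[of k] by (simp add: norm_mult)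
        also have "\<dots> \<le> eps k * (P * t1 ^ k)" using pb eps_pos[of k] by (intro mult_left_mono) auto
        also have "\<dots> \<le> eps k * (P * t1 ^ m)"
          using k t1pos eps_pos[of k] P0 by (intro mult_left_mono power_decreasing) auto
        finally show "norm (b k) \<le> P * t1 ^ m * eps k" by (simp add: mult_ac)
      qed (use P0 t1pos in auto)
    qed
    have bnd: "q (sN (Suc m)) \<le> CC * (R + q (sN (L + Suc m)))" for L
    proof -
      have A: "q (sN (Suc m) - 0) \<le> CC * (q (sN (Suc m) - sN (Suc m + L)) + q (sN (Suc m + L) - 0))"
        by (rule qtri_diff) (use sNE E0 in auto)
      have e: "q (sN (Suc m) - sN (Suc m + L)) \<le> R" using tail[of L] q_sym sNE by metis
      note A
      also have "CC * (q (sN (Suc m) - sN (Suc m + L)) + q (sN (Suc m + L) - 0)) \<le> CC * (R + q (sN (Suc m + L) - 0))"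
        using e CC1 by (intro mult_left_mono add_right_mono) auto
      finally show ?thesis by (simp add: add.commute)
    qed
    have "(\<lambda>L. CC * (R + q (sN (L + Suc m)))) \<longlonglongrightarrow> CC * (R + 0)"
      by (intro tendsto_intros LIMSEQ_ignore_initial_segment[OF lim0])
    hence "q (sN (Suc m)) \<le> CC * (R + 0)"
      by (rule tendsto_le[OF sequentially_bot _ tendsto_const]) (use bnd in auto)
    with a have "norm (b m) * dd m \<le> CC * R" by simp
    hence "(eps m * dd m) * norm (p m) \<le> (eps m * dd m) * (CC * P * t1 ^ m / real (Suc m))"
      unfolding b_def R_def using eps_pos[of m] by (simp add: norm_mult mult_ac)
    thus ?thesis using mult_left_le_imp_le[OF _ mult_pos_pos[OF eps_pos[of m] dd_pos[of m]]] by blast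
  qed
  define h where "h m = p m / of_real (t1 ^ m)" for m
  have h_eq: "h m = (\<Sum>t\<in>T'. c t * of_real ((t / t1) ^ m))" for m
    unfolding h_def p' using t1pos by (simp add: sum_divide_distrib power_divide)
  have "h \<longlonglongrightarrow> (\<Sum>t\<in>T'. c t * (if t = t1 then 1 else 0))"
    unfolding h_eq
  proof (intro tendsto_sum)
    fix t assume t: "t \<in> T'"
    show "(\<lambda>m. c t * of_real ((t / t1) ^ m)) \<longlonglongrightarrow> c t * (if t = t1 then 1 else 0)"
    proof (cases "t = t1")
      case True
      then show ?thesis using t1pos by simp
    next
      case False
      hence "t < t1" using t1(2)[OF t] by simp
      hence "norm (t / t1) < 1" using T'pos[OF t] t1pos by simp
      hence "(\<lambda>m. (t / t1) ^ m) \<longlonglongrightarrow> 0" by (rule LIMSEQ_power_zero)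
      hence "(\<lambda>m. of_real ((t / t1) ^ m) :: 'a) \<longlonglongrightarrow> of_real 0" by (rule tendsto_of_real)
      hence "(\<lambda>m. c t * of_real ((t / t1) ^ m)) \<longlonglongrightarrow> c t * 0" by (intro tendsto_intros) simp
      then show ?thesis using False by simp
    qed
  qed
  also have "(\<Sum>t\<in>T'. c t * (if t = t1 then 1 else 0)) = c t1"
    using t1(1) fT' by (simp add: if_distrib sum.delta cong: if_cong)
  finally have h1: "h \<longlonglongrightarrow> c t1" .
  have "h \<longlonglongrightarrow> 0"
  proof (rule Lim_null_comparison)
    show "\<forall>\<^sub>F m in sequentially. norm (h m) \<le> CC * P * inverse (real (Suc m))"
    proof (intro always_eventually allI)
      fix m
      have "norm (h m) = norm (p m) / t1 ^ m" unfolding h_def using t1pos by (simp add: norm_divide norm_power)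
      also have "\<dots> \<le> (CC * P * t1 ^ m / real (Suc m)) / t1 ^ m"
        using key[of m] t1pos by (intro divide_right_mono) auto
      also have "\<dots> = CC * P * inverse (real (Suc m))"
        by (rule div_cancel_h) (use t1pos in auto)
      finally show "norm (h m) \<le> CC * P * inverse (real (Suc m))" .
    qed
    show "(\<lambda>m. CC * P * inverse (real (Suc m))) \<longlonglongrightarrow> 0"
      by (intro tendsto_mult_right_zero LIMSEQ_inverse_real_of_nat)
  qed
  hence "c t1 = 0" using h1 LIMSEQ_unique by blast
  thus False using t1(1) T'_def by auto
qed

end


context gl begin

definition Wset where
  "Wset = {y \<in> E. \<exists>u. (\<forall>n. u n \<in> V.span (range g)) \<and> (\<lambda>n. q (u n - y)) \<longlonglongrightarrow> 0}"

lemma spanE_g: "V.span (range g) \<subseteq> E" using spanE gimgE by blast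

lemma Wset_iff: "y \<in> Wset \<longleftrightarrow> (\<exists>u. (\<forall>n. u n \<in> V.span (range g)) \<and> qlim u y)"
  unfolding Wset_def qlim_def using spanE_g by blast

lemma W_E: "Wset \<subseteq> E" unfolding Wset_def by auto

lemma span_W: "V.span (range g) \<subseteq> Wset"
proof
  fix y assume y: "y \<in> V.span (range g)"
  hence "qlim (\<lambda>n. y) y" using qlim_const spanE_g by blast
  thus "y \<in> Wset" unfolding Wset_iff by (intro exI[of _ "\<lambda>n. y"]) (use y in auto)
qed

lemma g_W: "g n \<in> Wset" using span_W V.span_base by blast

lemma W_sub: "V.subspace Wset"
proof (rule V.subspaceI)
  show "0 \<in> Wset" using span_W V.span_zero by blast
next
  fix x y assume "x \<in> Wset" "y \<in> Wset"
  then obtain u v where "\<forall>n. u n \<in> V.span (range g)" "qlim u x" "\<forall>n. v n \<in> V.span (range g)" "qlim v y"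
    unfolding Wset_iff by blast
  thus "x + y \<in> Wset" unfolding Wset_iff
    by (intro exI[of _ "\<lambda>n. u n + v n"]) (auto intro: qlim_add V.span_add)
next
  fix c x assume "x \<in> Wset"
  then obtain u where "\<forall>n. u n \<in> V.span (range g)" "qlim u x" unfolding Wset_iff by blast
  thus "seq_scale sc c x \<in> Wset" unfolding Wset_iff
    by (intro exI[of _ "\<lambda>n. seq_scale sc c (u n)"]) (auto intro: qlim_scale V.span_scale)
qed

lemma W_closed: "closed_in_qnorm E q Wset"
  unfolding closed_in_qnorm_def
proof (intro allI impI)
  fix w y assume a: "(\<forall>n. w n \<in> Wset) \<and> y \<in> E \<and> (\<lambda>n. q (w n - y)) \<longlonglongrightarrow> 0"
  have "\<exists>v. v \<in> V.span (range g) \<and> q (v - w n) < inverse (real (Suc n))" for n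
  proof -
    obtain u where u: "\<forall>k. u k \<in> V.span (range g)" "(\<lambda>k. q (u k - w n)) \<longlonglongrightarrow> 0"
      using a unfolding Wset_def by blast
    have "eventually (\<lambda>k. q (u k - w n) < inverse (real (Suc n))) sequentially"
      using u(2) by (intro order_tendstoD) auto
    then obtain k where "q (u k - w n) < inverse (real (Suc n))" by (auto simp: eventually_sequentially)
    thus ?thesis using u(1) by blast
  qed
  then obtain v where v: "\<And>n. v n \<in> V.span (range g)" "\<And>n. q (v n - w n) < inverse (real (Suc n))"
    by metis
  have vE: "v n \<in> E" for n using v spanE_g by blast
  have wE: "w n \<in> E" for n using a W_E by blast
  have le: "q (v n - y) \<le> CC * (inverse (real (Suc n)) + q (w n - y))" for n
  proof -
    have "q (v n - y) \<le> CC * (q (v n - w n) + q (w n - y))" by (rule qtri_diff) (use vE wE a in auto)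
    also have "\<dots> \<le> CC * (inverse (real (Suc n)) + q (w n - y))"
      using v(2)[of n] CC1 by (intro mult_left_mono add_right_mono) auto
    finally show ?thesis .
  qed
  have T0: "(\<lambda>n. CC * (inverse (real (Suc n)) + q (w n - y))) \<longlonglongrightarrow> 0"
    using a by (intro tendsto_mult_right_zero tendsto_add_zero LIMSEQ_inverse_real_of_nat) auto
  have "(\<lambda>n. q (v n - y)) \<longlonglongrightarrow> 0"
    by (rule zero_le_tendsto[OF _ le T0]) (use q_nonneg vE a Ediff in auto)
  thus "y \<in> Wset" unfolding Wset_def using v(1) a by blast
qed

lemma z_W: "0 \<le> t \<Longrightarrow> t \<le> 1 \<Longrightarrow> z t \<in> Wset"
  unfolding Wset_iff by (intro exI[of _ "\<lambda>N. SS N t"]) (use z_qlim S_span in auto)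

lemma z_inj: "inj_on z {0<..<1}"
proof (rule inj_onI, rule ccontr)
  fix s t assume st: "s \<in> {0<..<1}" "t \<in> {0<..<1}" "z s = z t" "s \<noteq> t"
  define c where "c r = (if r = s then 1 else - 1 :: 'a)" for r
  have "(\<Sum>r\<in>{s, t}. seq_scale sc (c r) (z r)) = z s - z t"
    using st by (simp add: c_def V.scale_minus_left)
  also have "\<dots> = 0" using st by simp
  finally have "\<forall>r\<in>{s,t}. c r = 0" by (intro indep_core) (use st in auto)
  thus False by (simp add: c_def)
qed

lemma Z_indep: "\<not> V.dependent (z ` {0<..<1})"
proof
  assume "V.dependent (z ` {0<..<1})"
  then obtain U u where U: "finite U" "U \<subseteq> z ` {0<..<1}" "(\<Sum>v\<in>U. seq_scale sc (u v) v) = 0"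
    "\<exists>v\<in>U. u v \<noteq> 0"
    unfolding V.dependent_explicit by auto
  define T where "T = {t \<in> {0<..<1}. z t \<in> U}"
  have TU: "z ` T = U"
  proof
    show "z ` T \<subseteq> U" by (auto simp: T_def)
    show "U \<subseteq> z ` T"
    proof
      fix v assume "v \<in> U"
      then obtain t where "t \<in> {0<..<1}" "v = z t" using U(2) by blast
      then show "v \<in> z ` T" using \<open>v \<in> U\<close> by (auto simp: T_def)
    qed
  qed
  have injT: "inj_on z T" by (rule inj_on_subset[OF z_inj]) (auto simp: T_def)
  have fT: "finite T" using U(1) TU injT finite_image_iff by blast
  have "(\<Sum>t\<in>T. seq_scale sc (u (z t)) (z t)) = (\<Sum>v\<in>U. seq_scale sc (u v) v)"
    unfolding TU[symmetric] by (rule sum.reindex[OF injT, symmetric, unfolded comp_def])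
  hence "\<forall>t\<in>T. u (z t) = 0" using U(3) fT T_def by (intro indep_core) auto
  thus False using U(4) TU by auto
qed

end


context gl begin

lemma g_inj: "inj g"
proof (rule injI, rule ccontr)
  fix m n assume e: "g m = g n" "m \<noteq> n"
  show False
  proof (cases "m < n")
    case True
    hence "g n \<in> V.span (g ` {..<n})" using e(1) by (metis V.span_base image_eqI lessThan_iff)
    thus False using gind by blast
  next
    case False
    hence "n < m" using e(2) by simp
    hence "g m \<in> V.span (g ` {..<m})" using e(1) by (metis V.span_base image_eqI lessThan_iff)
    thus False using gind by blast
  qed
qed

definition Psi :: "(nat \<Rightarrow> 'a) \<Rightarrow> (nat \<Rightarrow> 'b)" where
  "Psi a = (\<Sum>k<nat \<lfloor>norm (a 0)\<rfloor>. seq_scale sc (a (Suc k)) (g k))"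

lemma span_Psi: "V.span (range g) \<subseteq> range Psi"
proof
  fix x assume "x \<in> V.span (range g)"
  then obtain t r where tr: "x = (\<Sum>v\<in>t. seq_scale sc (r v) v)" "finite t" "t \<subseteq> range g"
    unfolding V.span_explicit by blast
  obtain C where C: "C \<subseteq> UNIV" "finite C" "t = g ` C" using finite_subset_image[OF tr(2,3)] by blast
  obtain N where N: "C \<subseteq> {..<N}" using finite_nat_bounded[OF C(2)] by blast
  define r' where "r' v = (if v \<in> t then r v else 0)" for v
  have tsub: "t \<subseteq> g ` {..<N}" using C N by auto
  have "x = (\<Sum>v\<in>g ` {..<N}. seq_scale sc (r' v) v)"
    unfolding tr(1) r'_def
    by (rule sum.mono_neutral_cong_left) (use tsub in \<open>auto simp: V.scale_zero_left\<close>)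
  also have "\<dots> = (\<Sum>k<N. seq_scale sc (r' (g k)) (g k))"
    by (subst sum.reindex) (use g_inj in \<open>auto intro: inj_on_subset\<close>)
  also have "\<dots> = Psi (\<lambda>i. if i = 0 then of_nat N else r' (g (i - 1)))"
    unfolding Psi_def by (simp add: norm_of_nat)
  finally show "x \<in> range Psi" by blast
qed

definition Phi where "Phi h = (THE y. qlim (\<lambda>n. Psi (h n)) y)"

lemma W_Phi: "Wset \<subseteq> range Phi"
proof
  fix y assume "y \<in> Wset"
  then obtain u where u: "\<forall>n. u n \<in> V.span (range g)" "qlim u y" unfolding Wset_iff by blast
  have "\<forall>n. \<exists>a. u n = Psi a" using u(1) span_Psi by blast
  then obtain h where h: "\<And>n. u n = Psi (h n)" by metis
  have "Phi h = y" unfolding Phi_def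
  proof (rule the_equality)
    show "qlim (\<lambda>n. Psi (h n)) y" using u(2) h by (metis (no_types, lifting) ext)
    thus "\<And>w. qlim (\<lambda>n. Psi (h n)) w \<Longrightarrow> w = y" using qlim_unique by blast
  qed
  thus "y \<in> range Phi" by blast
qed

lemma W_card: "Wset \<lesssim> (UNIV :: real set)"
proof -
  have "Wset \<lesssim> range Phi" using W_Phi by (rule subset_imp_lepoll)
  also have "range Phi \<lesssim> (UNIV :: (nat \<Rightarrow> nat \<Rightarrow> 'a) set)" by (rule image_lepoll)
  also have "\<dots> \<lesssim> (UNIV :: real set)" by (rule card_domain_le_real)
  finally show ?thesis .
qed

lemma W_dim: "dim_continuum (seq_scale sc) Wset"
proof -
  let ?Z = "z ` {0<..<1}"
  have ZW: "?Z \<subseteq> Wset" using z_W by auto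
  obtain B where B: "?Z \<subseteq> B" "B \<subseteq> Wset" "\<not> V.dependent B" "Wset \<subseteq> V.span B"
    using V.maximal_independent_subset_extend[OF ZW Z_indep] by blast
  have spB: "V.span B = Wset" using B V.span_minimal[OF B(2) W_sub] by blast
  have "B \<lesssim> (UNIV :: real set)" using subset_imp_lepoll[OF B(2)] W_card lepoll_trans by blast
  moreover have "(UNIV :: real set) \<lesssim> B"
  proof -
    have "(UNIV :: real set) \<lesssim> {0<..<1::real}"
      using open_interval_eqpoll_reals[of 0 1] eqpoll_sym eqpoll_imp_lepoll by auto
    also have "{0<..<1::real} \<lesssim> ?Z" unfolding lepoll_def using z_inj by blast
    also have "?Z \<lesssim> B" using B(1) by (rule subset_imp_lepoll)
    finally show ?thesis .
  qed
  ultimately have "B \<approx> (UNIV :: real set)" by (rule lepoll_antisym)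
  thus ?thesis unfolding dim_continuum_def using B(3) spB by blast
qed

end


lemma strict_mono_range_eq:
  fixes f h :: "nat \<Rightarrow> nat"
  assumes f: "strict_mono f" and h: "strict_mono h" and r: "range f = range h"
  shows "f = h"
proof
  fix n show "f n = h n"
  proof (induction n rule: less_induct)
    case (less n)
    obtain m where m: "f n = h m" using r by (metis rangeI imageE)
    obtain m' where m': "h n = f m'" using r by (metis rangeI imageE)
    show ?case
    proof (rule ccontr)
      assume ne: "f n \<noteq> h n"
      show False
      proof (cases "f n < h n")
        case True
        hence "h m < h n" using m by simp
        hence "m < n" using h by (simp add: strict_mono_less)
        hence "f m = h m" using less by blast
        hence "f m = f n" using m by simp
        hence "m = n" using f strict_mono_eq by blast
        thus False using \<open>m < n\<close> by simp
      next
        case False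
        hence "f m' < f n" using m' ne by simp
        hence "m' < n" using f by (simp add: strict_mono_less)
        hence "f m' = h m'" using less by blast
        hence "h m' = h n" using m' by simp
        hence "m' = n" using h strict_mono_eq by blast
        thus False using \<open>m' < n\<close> by simp
      qed
    qed
  qed
qed

lemma enum_image:
  fixes r :: "nat \<Rightarrow> nat"
  assumes r: "strict_mono r" and A: "infinite A"
  shows "enumerate (r ` A) = r \<circ> enumerate A"
proof (rule strict_mono_range_eq)
  have rA: "infinite (r ` A)" using A r strict_mono_imp_inj_on finite_imageD by (metis inj_on_subset subset_UNIV)
  show "strict_mono (enumerate (r ` A))" using rA by (rule strict_mono_enumerate)
  show "strict_mono (r \<circ> enumerate A)" using r strict_mono_enumerate[OF A]
    by (simp add: strict_mono_def)
  show "range (enumerate (r ` A)) = range (r \<circ> enumerate A)"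
    by (metis image_comp range_enumerate[OF rA] range_enumerate[OF A])
qed

lemma zero_free_shift:
  fixes w :: "nat \<Rightarrow> 'b::zero"
  assumes r: "strict_mono r" and z: "\<And>j. j \<notin> range r \<Longrightarrow> w j = 0"
  shows "zero_free w = zero_free (w \<circ> r)"
proof -
  let ?Sw = "{j. w j \<noteq> 0}" and ?Sr = "{k. w (r k) \<noteq> 0}"
  have img: "?Sw = r ` ?Sr"
  proof (rule set_eqI)
    fix j show "j \<in> ?Sw \<longleftrightarrow> j \<in> r ` ?Sr"
    proof
      assume j: "j \<in> ?Sw"
      then have "j \<in> range r" using z by blast
      then obtain k where "j = r k" by blast
      then show "j \<in> r ` ?Sr" using j by auto
    qed auto
  qed
  have inj: "inj r" using r strict_mono_imp_inj_on by blast
  have fin: "finite ?Sw \<longleftrightarrow> finite ?Sr" unfolding img using inj finite_image_iff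
    by (metis inj_on_subset subset_UNIV)
  show ?thesis
  proof (cases "finite ?Sr")
    case True
    then show ?thesis using fin unfolding zero_free_def by simp
  next
    case False
    have "enumerate ?Sw = r \<circ> enumerate ?Sr" unfolding img by (rule enum_image[OF r False])
    then show ?thesis using fin False unfolding zero_free_def by (simp add: fun_eq_iff)
  qed
qed

lemma zero_free_nz:
  fixes w :: "nat \<Rightarrow> 'b::zero"
  assumes "infinite {j. w j \<noteq> 0}"
  shows "zero_free w \<noteq> 0"
proof -
  have "zero_free w 0 = w (enumerate {j. w j \<noteq> 0} 0)" using assms by (simp add: zero_free_def)
  also have "\<dots> \<noteq> 0" using enumerate_in_set[OF assms] by simp
  finally show ?thesis by (metis zero_fun_apply)
qed

lemma ss_vs:
  fixes sc :: "'k::real_normed_field \<Rightarrow> 'a::banach \<Rightarrow> 'a"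
  assumes "scalar_structure sc" shows "vector_space (seq_scale sc)"
proof -
  interpret vector_space sc using assms by (simp add: scalar_structure_def)
  show ?thesis unfolding vector_space_def module_def seq_scale_def
    by (simp add: fun_eq_iff scale_right_distrib scale_left_distrib)
qed

lemma si_add:
  assumes ss: "scalar_structure sc" and F: "strongly_invariant_seq_space sc F qF"
    and "x \<in> F" "y \<in> F"
  shows "x + y \<in> F"
proof -
  have "quasi_banach_seq sc F qF" using F by (simp add: strongly_invariant_seq_space_def invariant_seq_space_def)
  hence sub: "module.subspace (seq_scale sc) F" by (simp add: quasi_banach_seq_def)
  have md: "module (seq_scale sc)" using ss_vs[OF ss] by (simp add: vector_space_def module_def)
  show ?thesis using sub assms(3,4) unfolding module.subspace_def[OF md] by blast
qed

lemma si_sub: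
  assumes F: "strongly_invariant_seq_space sc F qF" and "x \<in> F" "strict_mono r"
  shows "x \<circ> r \<in> F"
  using assms unfolding strongly_invariant_seq_space_def by blast

lemma si_c00:
  assumes F: "strongly_invariant_seq_space sc F qF" and "finite {j. x j \<noteq> 0}"
  shows "x \<in> F"
  using assms unfolding strongly_invariant_seq_space_def c00_def by blast

lemma inv_b1:
  assumes "invariant_seq_space sc F qF" "zero_free x \<noteq> 0"
  shows "x \<in> F \<longleftrightarrow> zero_free x \<in> F"
  using assms unfolding invariant_seq_space_def by blast

lemma si_half:
  assumes F: "strongly_invariant_seq_space sc F qF" and r: "strict_mono r"
    and z: "\<And>j. j \<notin> range r \<Longrightarrow> w j = 0" and wr: "w \<circ> r \<in> F"
  shows "w \<in> F"
proof (cases "finite {j. w j \<noteq> 0}")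
  case True
  then show ?thesis using si_c00[OF F] by blast
next
  case False
  have inv: "invariant_seq_space sc F qF" using F by (simp add: strongly_invariant_seq_space_def)
  have nz: "zero_free w \<noteq> 0" using False by (rule zero_free_nz)
  have eq: "zero_free w = zero_free (w \<circ> r)" by (rule zero_free_shift[OF r z])
  have "zero_free (w \<circ> r) \<in> F" using inv_b1[OF inv] nz eq wr by metis
  thus ?thesis using inv_b1[OF inv nz] eq by simp
qed



context qb begin

lemma indep_seq_W:
  fixes g :: "nat \<Rightarrow> nat \<Rightarrow> 'a"
  assumes gE: "\<And>n. g n \<in> E" and gind: "\<And>n. g n \<notin> V.span (g ` {..<n})"
  shows "\<exists>W. W \<subseteq> E \<and> V.subspace W \<and> closed_in_qnorm E q W \<and> dim_continuum (seq_scale sc) W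
     \<and> V.span (range g) \<subseteq> W \<and> (\<forall>W'. V.subspace W' \<and> closed_in_qnorm E q W' \<and> range g \<subseteq> W' \<and> W' \<subseteq> E \<longrightarrow> W \<subseteq> W')"
proof -
  interpret G: gl sc E q g by unfold_locales (use gE gind in auto)
  have min: "G.Wset \<subseteq> W'" if W': "V.subspace W'" "closed_in_qnorm E q W'" "range g \<subseteq> W'" "W' \<subseteq> E" for W'
  proof
    fix y assume "y \<in> G.Wset"
    then obtain u where u: "\<forall>n. u n \<in> V.span (range g)" "(\<lambda>n. q (u n - y)) \<longlonglongrightarrow> 0" "y \<in> E"
      unfolding G.Wset_def by blast
    have "V.span (range g) \<subseteq> W'" using V.span_minimal W' by blast
    thus "y \<in> W'" using W'(2) u unfolding closed_in_qnorm_def by blast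
  qed
  show ?thesis
    by (intro exI[of _ G.Wset] conjI G.W_E G.W_sub G.W_closed G.W_dim G.span_W allI impI) (use min in blast)
qed

lemma exists_W:
  assumes x: "x \<in> E"
  shows "\<exists>W. W \<subseteq> E \<and> V.subspace W \<and> closed_in_qnorm E q W \<and> dim_continuum (seq_scale sc) W \<and> x \<in> W"
proof -
  define S0 where "S0 = (if x = 0 then {} else {x})"
  have S0E: "S0 \<subseteq> E" using x S0_def by auto
  have S0i: "\<not> V.dependent S0" unfolding S0_def using V.independent_empty by auto
  obtain B where B: "S0 \<subseteq> B" "B \<subseteq> E" "\<not> V.dependent B" "E \<subseteq> V.span B"
    using V.maximal_independent_subset_extend[OF S0E S0i] by blast
  have "infinite B"
  proof
    assume "finite B"
    moreover have "V.span B = E" using B spanE by blast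
    ultimately show False using infdim B(2) unfolding infinite_dim_def by blast
  qed
  hence "infinite (B - {x})" by simp
  then obtain h :: "nat \<Rightarrow> _" where h: "inj h" "range h \<subseteq> B - {x}"
    using infinite_countable_subset by blast
  define g where "g n = (if x \<noteq> 0 then (if n = 0 then x else h (n - 1)) else h n)" for n
  have gB: "g n \<in> B" for n using h B(1) S0_def g_def by (auto split: if_splits)
  have ginj: "inj g"
  proof (rule injI)
    fix m n assume e: "g m = g n"
    show "m = n"
    proof (cases "x = 0")
      case True then show ?thesis using e h(1) by (simp add: g_def inj_def)
    next
      case False
      have hx: "h k \<noteq> x" for k using h(2) by auto
      show ?thesis
      proof (cases "m = 0"; cases "n = 0")
        assume "m \<noteq> 0" "n \<noteq> 0"
        hence "h (m - 1) = h (n - 1)" using e False by (simp add: g_def)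
        hence "m - 1 = n - 1" using h(1) by (simp add: inj_def)
        thus ?thesis using \<open>m \<noteq> 0\<close> \<open>n \<noteq> 0\<close> by simp
      qed (use e False hx in \<open>auto simp: g_def\<close>)
    qed
  qed
  have gE: "g n \<in> E" for n using gB B(2) by auto
  have gind: "g n \<notin> V.span (g ` {..<n})" for n
  proof -
    have sub: "insert (g n) (g ` {..<n}) \<subseteq> B" using gB by auto
    hence ind: "\<not> V.dependent (insert (g n) (g ` {..<n}))" using B(3) V.dependent_mono by blast
    have "g n \<notin> g ` {..<n}" using ginj by (auto simp: inj_def)
    thus ?thesis using ind V.independent_insert by auto
  qed
  obtain W where W: "W \<subseteq> E" "V.subspace W" "closed_in_qnorm E q W" "dim_continuum (seq_scale sc) W"
    "V.span (range g) \<subseteq> W" using indep_seq_W[OF gE gind] by blast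
  have "x \<in> W"
  proof (cases "x = 0")
    case True then show ?thesis using W(2) V.subspace_0 by blast
  next
    case False
    hence "x = g 0" by (simp add: g_def)
    then show ?thesis using W(5) V.span_base by blast
  qed
  thus ?thesis using W by blast
qed

end


lemma range_even_odd: "range (\<lambda>k::nat. 2 * k) \<union> range (\<lambda>k. 2 * k + 1) = UNIV"
proof -
  have "n \<in> range (\<lambda>k::nat. 2 * k) \<union> range (\<lambda>k. 2 * k + 1)" for n
  proof (cases "even n")
    case True then show ?thesis by (auto elim: evenE)
  next
    case False then show ?thesis by (auto elim: oddE)
  qed
  thus ?thesis by blast
qed

lemma split_bad:
  fixes scY :: "'k::real_normed_field \<Rightarrow> 'c::banach \<Rightarrow> 'c" and Es :: "'g \<Rightarrow> (nat \<Rightarrow> 'c) set"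
    and f :: "'a::zero \<Rightarrow> 'c" and x :: "nat \<Rightarrow> 'a"
  assumes ssY: "scalar_structure scY" and si: "\<forall>l\<in>\<Gamma>. strongly_invariant_seq_space scY (Es l) (qs l)"
    and nest: "nested \<Gamma> Es" and f0: "f 0 = 0"
    and Sinf: "infinite {j. x j \<noteq> 0}"
    and vU: "(\<lambda>j. f (x j)) \<notin> (\<Union>l\<in>\<Gamma>. Es l)"
  shows "\<exists>\<tau> (\<rho>::nat \<Rightarrow> nat). strict_mono \<tau> \<and> strict_mono \<rho> \<and> (\<forall>k k'. \<tau> k \<noteq> \<rho> k') \<and> (\<forall>k. x (\<tau> k) \<noteq> 0)
     \<and> (\<forall>l\<in>\<Gamma>. (\<lambda>k. f (x (\<tau> k))) \<notin> Es l)"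
proof -
  let ?S = "{j. x j \<noteq> 0}"
  define \<sigma> where "\<sigma> = enumerate ?S"
  have \<sigma>: "strict_mono \<sigma>" "range \<sigma> = ?S"
    using strict_mono_enumerate[OF Sinf] range_enumerate[OF Sinf] \<sigma>_def by auto
  define se where "se = \<sigma> \<circ> (\<lambda>k. 2 * k)"
  define so where "so = \<sigma> \<circ> (\<lambda>k. 2 * k + 1)"
  have se: "strict_mono se" unfolding se_def using \<sigma>(1) by (simp add: strict_mono_def)
  have so: "strict_mono so" unfolding so_def using \<sigma>(1) by (simp add: strict_mono_def)
  have dis: "se k \<noteq> so k'" for k k'
  proof
    assume "se k = so k'"
    hence "2 * k = 2 * k' + 1" using strict_mono_eq[OF \<sigma>(1)] by (simp add: se_def so_def)
    thus False by presburger
  qed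
  have cover: "range se \<union> range so = range \<sigma>"
  proof -
    have "range se \<union> range so = \<sigma> ` (range (\<lambda>k::nat. 2 * k) \<union> range (\<lambda>k. 2 * k + 1))"
      unfolding se_def so_def by (simp add: image_Un image_comp)
    thus ?thesis using range_even_odd by simp
  qed
  have xse: "x (se k) \<noteq> 0" for k using \<sigma>(2) se_def by (metis (mono_tags, lifting) comp_apply mem_Collect_eq rangeI)
  have xso: "x (so k) \<noteq> 0" for k using \<sigma>(2) so_def by (metis (mono_tags, lifting) comp_apply mem_Collect_eq rangeI)
  let ?v = "\<lambda>j. f (x j)"
  have "(\<forall>l\<in>\<Gamma>. (\<lambda>k. f (x (se k))) \<notin> Es l) \<or> (\<forall>l\<in>\<Gamma>. (\<lambda>k. f (x (so k))) \<notin> Es l)"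
  proof (rule ccontr)
    assume "\<not> ?thesis"
    then obtain l1 l2 where l: "l1 \<in> \<Gamma>" "l2 \<in> \<Gamma>" "(\<lambda>k. f (x (se k))) \<in> Es l1" "(\<lambda>k. f (x (so k))) \<in> Es l2"
      by blast
    obtain l where ll: "l \<in> \<Gamma>" "(\<lambda>k. f (x (se k))) \<in> Es l" "(\<lambda>k. f (x (so k))) \<in> Es l"
      using nest l unfolding nested_def by blast
    have F: "strongly_invariant_seq_space scY (Es l) (qs l)" using si ll(1) by blast
    define ae where "ae j = (if j \<in> range se then ?v j else 0)" for j
    define ao where "ao j = (if j \<in> range so then ?v j else 0)" for j
    have "ae \<circ> se = (\<lambda>k. f (x (se k)))" by (auto simp: ae_def)
    hence aeF: "ae \<in> Es l" using si_half[OF F se, of ae] ll(2) by (auto simp: ae_def)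
    have "ao \<circ> so = (\<lambda>k. f (x (so k)))" by (auto simp: ao_def)
    hence aoF: "ao \<in> Es l" using si_half[OF F so, of ao] ll(3) by (auto simp: ao_def)
    have "?v = ae + ao"
    proof
      fix j
      show "?v j = (ae + ao) j"
      proof (cases "j \<in> range se")
        case True
        hence "j \<notin> range so" using dis by auto
        then show ?thesis using True by (simp add: ae_def ao_def)
      next
        case False
        show ?thesis
        proof (cases "j \<in> range so")
          case True then show ?thesis using False by (simp add: ae_def ao_def)
        next
          case False2: False
          hence "j \<notin> range \<sigma>" using cover False by blast
          hence "x j = 0" using \<sigma>(2) by blast
          then show ?thesis using False False2 f0 by (simp add: ae_def ao_def)
        qed
      qed
    qed
    hence "?v \<in> Es l" using si_add[OF ssY F aeF aoF] by simp
    thus False using vU ll(1) by blast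
  qed
  thus ?thesis
  proof
    assume "\<forall>l\<in>\<Gamma>. (\<lambda>k. f (x (se k))) \<notin> Es l"
    hence "strict_mono se \<and> strict_mono so \<and> (\<forall>k k'. se k \<noteq> so k') \<and> (\<forall>k. x (se k) \<noteq> 0)
       \<and> (\<forall>l\<in>\<Gamma>. (\<lambda>k. f (x (se k))) \<notin> Es l)" using se so dis xse by auto
    thus ?thesis by blast
  next
    assume "\<forall>l\<in>\<Gamma>. (\<lambda>k. f (x (so k))) \<notin> Es l"
    hence "strict_mono so \<and> strict_mono se \<and> (\<forall>k k'. so k \<noteq> se k') \<and> (\<forall>k. x (so k) \<noteq> 0)
       \<and> (\<forall>l\<in>\<Gamma>. (\<lambda>k. f (x (so k))) \<notin> Es l)" using se so dis[THEN not_sym] xso by auto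
    thus ?thesis by blast
  qed
qed



lemma pe_mono: "strict_mono (\<lambda>k. prod_encode (i, k))"
  unfolding strict_mono_Suc_iff prod_encode_def by simp

context qb begin

lemma sclim:
  assumes v: "v \<noteq> 0" and w: "(\<lambda>n. sc (b n) v) \<longlonglongrightarrow> w"
  shows "\<exists>\<beta>. b \<longlonglongrightarrow> \<beta> \<and> w = sc \<beta> v"
proof -
  have C: "Cauchy (\<lambda>n. sc (b n) v)" using w convergent_Cauchy convergent_def by blast
  have "Cauchy b"
  proof (rule CauchyI)
    fix e :: real assume e: "e > 0"
    have "e * norm v > 0" using e v by simp
    then obtain M where M: "\<forall>m\<ge>M. \<forall>n\<ge>M. norm (sc (b m) v - sc (b n) v) < e * norm v"
      using C unfolding Cauchy_iff by blast
    have "norm (b m - b n) < e" if "m \<ge> M" "n \<ge> M" for m n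
    proof -
      have "norm (b m - b n) * norm v < e * norm v"
        using M that by (simp add: norm_sc S.scale_left_diff_distrib[symmetric])
      thus ?thesis using v by simp
    qed
    thus "\<exists>M. \<forall>m\<ge>M. \<forall>n\<ge>M. norm (b m - b n) < e" by blast
  qed
  then obtain \<beta> where \<beta>: "b \<longlonglongrightarrow> \<beta>" using Cauchy_convergent_iff convergent_def by blast
  have "(\<lambda>n. sc (b n) v) \<longlonglongrightarrow> sc \<beta> v" by (rule sc_tendsto[OF \<beta>])
  hence "w = sc \<beta> v" using w LIMSEQ_unique by blast
  thus ?thesis using \<beta> by blast
qed

lemma sc_eq0: "sc b v = 0 \<Longrightarrow> v \<noteq> 0 \<Longrightarrow> b = 0"
  using norm_sc[of b v] by simp

end



context qb begin

lemma main_nonempty: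
  fixes scY :: "'k \<Rightarrow> 'c::banach \<Rightarrow> 'c" and Es :: "'g \<Rightarrow> (nat \<Rightarrow> 'c) set" and f :: "'a \<Rightarrow> 'c"
  assumes ssY: "scalar_structure scY" and si: "\<forall>l\<in>\<Gamma>. strongly_invariant_seq_space scY (Es l) (qs l)"
    and cp: "\<forall>l\<in>\<Gamma>. compatible sc f (Es l)" and nest: "nested \<Gamma> Es" and Gne: "\<Gamma> \<noteq> {}"
    and xG: "x \<in> G_set E f \<Gamma> Es"
  shows "\<exists>W. W \<subseteq> E \<and> V.subspace W \<and> closed_in_qnorm E q W \<and> dim_continuum (seq_scale sc) W \<and> x \<in> W
     \<and> W \<subseteq> G_set E f \<Gamma> Es \<union> {0}"
proof -
  obtain l0 where l0: "l0 \<in> \<Gamma>" using Gne by blast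
  have f0: "f 0 = 0" using cp l0 unfolding compatible_def by blast
  have xE: "x \<in> E" and vU: "(\<lambda>j. f (x j)) \<notin> (\<Union>l\<in>\<Gamma>. Es l)" using xG by (auto simp: G_set_def)
  have F0: "strongly_invariant_seq_space scY (Es l0) (qs l0)" using si l0 by blast
  have "infinite {j. f (x j) \<noteq> 0}" using si_c00[OF F0, of "\<lambda>j. f (x j)"] vU l0 by blast
  moreover have "{j. f (x j) \<noteq> 0} \<subseteq> {j. x j \<noteq> 0}" using f0 by auto
  ultimately have Sinf: "infinite {j. x j \<noteq> 0}" using infinite_super by blast
  define \<sigma> where "\<sigma> = enumerate {j. x j \<noteq> 0}"
  have \<sigma>: "strict_mono \<sigma>" "range \<sigma> = {j. x j \<noteq> 0}"
    using strict_mono_enumerate[OF Sinf] range_enumerate[OF Sinf] \<sigma>_def by auto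
  have x\<sigma>: "x (\<sigma> k) \<noteq> 0" for k using \<sigma>(2) by blast
  have xoff: "j \<notin> range \<sigma> \<Longrightarrow> x j = 0" for j using \<sigma>(2) by blast
  obtain \<tau> \<rho> :: "nat \<Rightarrow> nat" where tr: "strict_mono \<tau>" "strict_mono \<rho>" "\<And>k k'. \<tau> k \<noteq> \<rho> k'"
    "\<And>k. x (\<tau> k) \<noteq> 0" "\<forall>l\<in>\<Gamma>. (\<lambda>k. f (x (\<tau> k))) \<notin> Es l"
    using split_bad[OF ssY si nest f0 Sinf vU] by blast
  define \<nu> where "\<nu> i k = \<rho> (prod_encode (i, k))" for i k
  have \<nu>_mono: "strict_mono (\<nu> i)" for i
    using tr(2) pe_mono[of i] unfolding \<nu>_def strict_mono_def by simp
  have \<nu>_inj: "\<nu> i k = \<nu> i' k' \<longleftrightarrow> i = i' \<and> k = k'" for i k i' k'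
    using strict_mono_eq[OF tr(2)] prod_encode_eq unfolding \<nu>_def by auto
  have \<nu>_tau: "\<nu> i k \<noteq> \<tau> k'" for i k k' using tr(3) unfolding \<nu>_def by metis
  define NN where "NN = (\<Union>i. range (\<nu> i))"
  have tau_nu: "\<tau> k' \<noteq> \<nu> i k" for i k k' using \<nu>_tau[of i k k'] by (rule not_sym)
  have tauN: "\<tau> k \<notin> NN" for k unfolding NN_def using tau_nu by blast
  define e where "e i j = (if j \<in> range (\<nu> i) then x (\<sigma> (inv (\<nu> i) j)) else 0)" for i j
  have e_nu: "e i (\<nu> i k) = x (\<sigma> k)" for i k
    using strict_mono_imp_inj_on[OF \<nu>_mono[of i]] by (simp add: e_def inv_f_f)
  have e_off: "j \<notin> range (\<nu> i) \<Longrightarrow> e i j = 0" for i j by (simp add: e_def)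
  obtain K where K: "\<forall>y. zero_free y \<noteq> 0 \<longrightarrow> (y \<in> E \<longleftrightarrow> zero_free y \<in> E) \<and> (y \<in> E \<longrightarrow> q y \<le> K * q (zero_free y))"
    using inv unfolding invariant_seq_space_def by blast
  have zx: "zero_free x \<noteq> 0" using Sinf by (rule zero_free_nz)
  have zxE: "zero_free x \<in> E" using K zx xE by blast
  have eE: "e i \<in> E" for i
  proof -
    have "zero_free (e i) = zero_free (e i \<circ> \<nu> i)" by (rule zero_free_shift[OF \<nu>_mono]) (use e_off in auto)
    also have "e i \<circ> \<nu> i = x \<circ> \<sigma>" using e_nu by (auto simp: fun_eq_iff)
    also have "zero_free (x \<circ> \<sigma>) = zero_free x" by (rule zero_free_shift[OF \<sigma>(1), symmetric]) (use xoff in auto)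
    finally have "zero_free (e i) = zero_free x" .
    thus ?thesis using K zx zxE by metis
  qed
  define g where "g n = (if n = 0 then x else e (n - 1))" for n
  have gE: "g n \<in> E" for n using xE eE g_def by auto
  have x0: "x \<noteq> 0" using x\<sigma>[of 0] by auto
  have gind: "g n \<notin> V.span (g ` {..<n})" for n
  proof (cases n)
    case 0 then show ?thesis using x0 by (simp add: g_def)
  next
    case (Suc i)
    define A where "A = {y. \<exists>b. (\<forall>k. y (\<tau> k) = sc b (x (\<tau> k))) \<and> (\<forall>k. y (\<nu> i k) = sc b (x (\<nu> i k)))}"
    have subA: "V.subspace A"
    proof (rule V.subspaceI)
      show "0 \<in> A" unfolding A_def by (intro CollectI exI[of _ 0]) (simp add: S.scale_zero_left)
    next
      fix y y' assume "y \<in> A" "y' \<in> A"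
      then obtain b b' where "\<forall>k. y (\<tau> k) = sc b (x (\<tau> k))" "\<forall>k. y (\<nu> i k) = sc b (x (\<nu> i k))"
        "\<forall>k. y' (\<tau> k) = sc b' (x (\<tau> k))" "\<forall>k. y' (\<nu> i k) = sc b' (x (\<nu> i k))"
        unfolding A_def by blast
      thus "y + y' \<in> A" unfolding A_def
        by (intro CollectI exI[of _ "b + b'"]) (simp add: S.scale_left_distrib)
    next
      fix c y assume "y \<in> A"
      then obtain b where "\<forall>k. y (\<tau> k) = sc b (x (\<tau> k))" "\<forall>k. y (\<nu> i k) = sc b (x (\<nu> i k))"
        unfolding A_def by blast
      thus "seq_scale sc c y \<in> A" unfolding A_def
        by (intro CollectI exI[of _ "c * b"]) (simp add: seq_scale_apply)
    qed
    have gA: "g ` {..<n} \<subseteq> A"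
    proof
      fix y assume "y \<in> g ` {..<n}"
      then obtain m where m: "m < n" "y = g m" by blast
      show "y \<in> A"
      proof (cases m)
        case 0
        then show ?thesis using m unfolding A_def g_def by (intro CollectI exI[of _ 1]) simp
      next
        case (Suc i')
        hence "i' \<noteq> i" using m Suc \<open>n = Suc i\<close> by simp
        have "\<tau> k \<notin> range (\<nu> i')" for k using tau_nu by blast
        moreover have "\<nu> i k \<notin> range (\<nu> i')" for k using \<nu>_inj \<open>i' \<noteq> i\<close> by auto
        ultimately show ?thesis using m Suc e_off unfolding A_def g_def
          by (intro CollectI exI[of _ 0]) (simp add: S.scale_zero_left)
      qed
    qed
    have spA: "V.span (g ` {..<n}) \<subseteq> A" using V.span_minimal[OF gA subA] .
    show ?thesis
    proof
      assume "g n \<in> V.span (g ` {..<n})"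
      hence "e i \<in> A" using spA \<open>n = Suc i\<close> by (auto simp: g_def)
      then obtain b where b: "\<forall>k. e i (\<tau> k) = sc b (x (\<tau> k))" "\<forall>k. e i (\<nu> i k) = sc b (x (\<nu> i k))"
        unfolding A_def by blast
      have "e i (\<tau> 0) = 0" using e_off \<nu>_tau by (metis imageE)
      hence "b = 0" using b(1) tr(4) sc_eq0 by metis
      hence "e i (\<nu> i 0) = 0" using b(2) by (simp add: S.scale_zero_left)
      thus False using e_nu x\<sigma> by metis
    qed
  qed
  from indep_seq_W[OF gE gind] obtain W where W0: "W \<subseteq> E \<and> V.subspace W \<and> closed_in_qnorm E q W \<and> dim_continuum (seq_scale sc) W
     \<and> V.span (range g) \<subseteq> W \<and> (\<forall>W'. V.subspace W' \<and> closed_in_qnorm E q W' \<and> range g \<subseteq> W' \<and> W' \<subseteq> E \<longrightarrow> W \<subseteq> W')"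
    by (elim exE)
  have W: "W \<subseteq> E" "V.subspace W" "closed_in_qnorm E q W" "dim_continuum (seq_scale sc) W"
    "V.span (range g) \<subseteq> W"
    "\<And>W'. V.subspace W' \<Longrightarrow> closed_in_qnorm E q W' \<Longrightarrow> range g \<subseteq> W' \<Longrightarrow> W' \<subseteq> E \<Longrightarrow> W \<subseteq> W'"
    using W0 by auto
  have "g 0 = x" by (simp add: g_def)
  hence "x \<in> range g" by (metis rangeI)
  hence xW: "x \<in> W" using W(5) V.span_base[of x "range g"] by blast
  define Vst where "Vst = {y \<in> E. \<exists>b a. (\<forall>j. j \<notin> NN \<longrightarrow> y j = sc b (x j)) \<and>
     (\<forall>i k. y (\<nu> i k) = sc b (x (\<nu> i k)) + sc (a i) (x (\<sigma> k)))}"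
  have Vst_E: "Vst \<subseteq> E" unfolding Vst_def by blast
  have Vst_sub: "V.subspace Vst"
  proof (rule V.subspaceI)
    show "0 \<in> Vst" unfolding Vst_def using E0
      by (intro CollectI conjI exI[of _ 0] exI[of _ "\<lambda>_. 0"]) (auto simp: S.scale_zero_left)
  next
    fix y y' assume "y \<in> Vst" "y' \<in> Vst"
    then obtain b a b' a' where yy: "y \<in> E" "y' \<in> E" "\<forall>j. j \<notin> NN \<longrightarrow> y j = sc b (x j)"
      "\<forall>i k. y (\<nu> i k) = sc b (x (\<nu> i k)) + sc (a i) (x (\<sigma> k))"
      "\<forall>j. j \<notin> NN \<longrightarrow> y' j = sc b' (x j)"
      "\<forall>i k. y' (\<nu> i k) = sc b' (x (\<nu> i k)) + sc (a' i) (x (\<sigma> k))"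
      unfolding Vst_def by blast
    thus "y + y' \<in> Vst" unfolding Vst_def using Eadd
      by (intro CollectI conjI exI[of _ "b + b'"] exI[of _ "\<lambda>i. a i + a' i"])
         (auto simp: S.scale_left_distrib algebra_simps)
  next
    fix c y assume "y \<in> Vst"
    then obtain b a where yy: "y \<in> E" "\<forall>j. j \<notin> NN \<longrightarrow> y j = sc b (x j)"
      "\<forall>i k. y (\<nu> i k) = sc b (x (\<nu> i k)) + sc (a i) (x (\<sigma> k))"
      unfolding Vst_def by blast
    thus "seq_scale sc c y \<in> Vst" unfolding Vst_def using Escale
      by (intro CollectI conjI exI[of _ "c * b"] exI[of _ "\<lambda>i. c * a i"])
         (auto simp: seq_scale_apply S.scale_right_distrib)
  qed
  have g_Vst: "range g \<subseteq> Vst"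
  proof
    fix y assume "y \<in> range g"
    then obtain n where n: "y = g n" by blast
    show "y \<in> Vst"
    proof (cases n)
      case 0
      then show ?thesis using n xE unfolding Vst_def g_def
        by (intro CollectI conjI exI[of _ 1] exI[of _ "\<lambda>_. 0"]) (auto simp: S.scale_zero_left)
    next
      case (Suc i')
      have A1: "\<forall>j. j \<notin> NN \<longrightarrow> e i' j = sc 0 (x j)"
        using e_off unfolding NN_def by (auto simp: S.scale_zero_left)
      have A2: "\<forall>i k. e i' (\<nu> i k) = sc 0 (x (\<nu> i k)) + sc (if i = i' then 1 else 0) (x (\<sigma> k))"
      proof (intro allI)
        fix i k show "e i' (\<nu> i k) = sc 0 (x (\<nu> i k)) + sc (if i = i' then 1 else 0) (x (\<sigma> k))"
        proof (cases "i = i'")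
          case True then show ?thesis using e_nu by (simp add: S.scale_zero_left)
        next
          case False
          hence "\<nu> i k \<notin> range (\<nu> i')" using \<nu>_inj by auto
          then show ?thesis using False e_off by (simp add: S.scale_zero_left)
        qed
      qed
      have "e i' \<in> Vst" unfolding Vst_def
        apply (rule CollectI, rule conjI, rule eE)
        apply (rule exI[of _ 0], rule exI[of _ "\<lambda>i. if i = i' then 1 else 0"])
        using A1 A2 by blast
      then show ?thesis using n Suc by (simp add: g_def)
    qed
  qed
  have Vst_closed: "closed_in_qnorm E q Vst"
    unfolding closed_in_qnorm_def
  proof (intro allI impI)
    fix u z assume a: "(\<forall>n. u n \<in> Vst) \<and> z \<in> E \<and> (\<lambda>n. q (u n - z)) \<longlonglongrightarrow> 0"
    have ql: "qlim u z" using a Vst_E unfolding qlim_def by blast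
    have co: "(\<lambda>n. u n j) \<longlonglongrightarrow> z j" for j by (rule qlim_coord[OF ql])
    have "\<forall>n. \<exists>b a. (\<forall>j. j \<notin> NN \<longrightarrow> u n j = sc b (x j)) \<and>
     (\<forall>i k. u n (\<nu> i k) = sc b (x (\<nu> i k)) + sc (a i) (x (\<sigma> k)))" using a unfolding Vst_def by blast
    then obtain b a where ba: "\<And>n j. j \<notin> NN \<Longrightarrow> u n j = sc (b n) (x j)"
      "\<And>n i k. u n (\<nu> i k) = sc (b n) (x (\<nu> i k)) + sc (a n i) (x (\<sigma> k))" by metis
    have "(\<lambda>n. sc (b n) (x (\<tau> 0))) \<longlonglongrightarrow> z (\<tau> 0)" using co[of "\<tau> 0"] ba(1)[OF tauN] by simp
    then obtain \<beta> where \<beta>: "b \<longlonglongrightarrow> \<beta>" using sclim tr(4) by blast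
    have off: "z j = sc \<beta> (x j)" if "j \<notin> NN" for j
    proof -
      have "(\<lambda>n. u n j) \<longlonglongrightarrow> sc \<beta> (x j)" using sc_tendsto[OF \<beta>] ba(1)[OF that] by simp
      thus ?thesis using co LIMSEQ_unique by blast
    qed
    have "\<exists>\<alpha>. (\<lambda>n. a n i) \<longlonglongrightarrow> \<alpha>" for i
    proof -
      have "(\<lambda>n. u n (\<nu> i 0) - sc (b n) (x (\<nu> i 0))) \<longlonglongrightarrow> z (\<nu> i 0) - sc \<beta> (x (\<nu> i 0))"
        by (intro tendsto_diff co sc_tendsto[OF \<beta>])
      hence "(\<lambda>n. sc (a n i) (x (\<sigma> 0))) \<longlonglongrightarrow> z (\<nu> i 0) - sc \<beta> (x (\<nu> i 0))" using ba(2) by simp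
      from sclim[OF x\<sigma>[of 0] this] show ?thesis by blast
    qed
    then obtain \<alpha> where \<alpha>: "\<And>i. (\<lambda>n. a n i) \<longlonglongrightarrow> \<alpha> i" by metis
    have on: "z (\<nu> i k) = sc \<beta> (x (\<nu> i k)) + sc (\<alpha> i) (x (\<sigma> k))" for i k
    proof -
      have "(\<lambda>n. u n (\<nu> i k)) \<longlonglongrightarrow> sc \<beta> (x (\<nu> i k)) + sc (\<alpha> i) (x (\<sigma> k))"
        unfolding ba(2) by (intro tendsto_add sc_tendsto[OF \<beta>] sc_tendsto[OF \<alpha>])
      thus ?thesis using co LIMSEQ_unique by blast
    qed
    show "z \<in> Vst" unfolding Vst_def using a off on by blast
  qed
  have WV: "W \<subseteq> Vst" by (rule W(6)[OF Vst_sub Vst_closed g_Vst Vst_E])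
  have VG: "y \<in> G_set E f \<Gamma> Es" if y: "y \<in> Vst" "y \<noteq> 0" for y
  proof -
    obtain b a where ba: "y \<in> E" "\<forall>j. j \<notin> NN \<longrightarrow> y j = sc b (x j)"
      "\<forall>i k. y (\<nu> i k) = sc b (x (\<nu> i k)) + sc (a i) (x (\<sigma> k))" using y unfolding Vst_def by blast
    have "(\<lambda>j. f (y j)) \<notin> Es l" if l: "l \<in> \<Gamma>" for l
    proof
      assume yF: "(\<lambda>j. f (y j)) \<in> Es l"
      have F: "strongly_invariant_seq_space scY (Es l) (qs l)" using si l by blast
      have cpl: "\<And>xs a. a \<noteq> 0 \<Longrightarrow> (\<lambda>j. f (xs j)) \<notin> Es l \<Longrightarrow> (\<lambda>j. f (sc a (xs j))) \<notin> Es l"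
        using cp l unfolding compatible_def by blast
      show False
      proof (cases "b = 0")
        case False
        have "(\<lambda>k. f (sc b (x (\<tau> k)))) \<notin> Es l" using cpl[OF False, of "\<lambda>k. x (\<tau> k)"] tr(5) l by blast
        moreover have "(\<lambda>j. f (y j)) \<circ> \<tau> = (\<lambda>k. f (sc b (x (\<tau> k))))" using ba(2) tauN by auto
        ultimately show False using si_sub[OF F yF tr(1)] by simp
      next
        case True
        obtain j where j: "y j \<noteq> 0" using y(2) by (auto simp: fun_eq_iff)
        have "j \<in> NN" using j ba(2) True by (auto simp: S.scale_zero_left)
        then obtain i k where ik: "j = \<nu> i k" unfolding NN_def by blast
        have yik: "y (\<nu> i k) = sc (a i) (x (\<sigma> k))" using ba(3) True by (simp add: S.scale_zero_left)
        hence ai: "a i \<noteq> 0" using j ik by (auto simp: S.scale_zero_left)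
        have "(\<lambda>k. f (x (\<sigma> k))) \<notin> Es l"
        proof
          assume "(\<lambda>k. f (x (\<sigma> k))) \<in> Es l"
          hence "(\<lambda>j. f (x j)) \<in> Es l"
            using si_half[OF F \<sigma>(1), of "\<lambda>j. f (x j)"] xoff f0 by (auto simp: comp_def)
          thus False using vU l by blast
        qed
        hence "(\<lambda>k. f (sc (a i) (x (\<sigma> k)))) \<notin> Es l" using cpl[OF ai, of "\<lambda>k. x (\<sigma> k)"] by blast
        moreover have "(\<lambda>j. f (y j)) \<circ> \<nu> i = (\<lambda>k. f (sc (a i) (x (\<sigma> k))))"
          using ba(3) True by (auto simp: S.scale_zero_left)
        ultimately show False using si_sub[OF F yF \<nu>_mono[of i]] by simp
      qed
    qed
    thus ?thesis using ba(1) unfolding G_set_def by blast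
  qed
  have "W \<subseteq> G_set E f \<Gamma> Es \<union> {0}" using WV VG by blast
  thus ?thesis using W xW by blast
qed

end


theorem mainTheorem2:
  fixes scX :: "'k::{real_normed_field, euclidean_space} \<Rightarrow> 'a::banach \<Rightarrow> 'a"
    and scY :: "'k \<Rightarrow> 'b::banach \<Rightarrow> 'b"
    and E :: "(nat \<Rightarrow> 'a) set" and q :: "(nat \<Rightarrow> 'a) \<Rightarrow> real"
    and \<Gamma> :: "'g set"
    and Es :: "'g \<Rightarrow> (nat \<Rightarrow> 'b) set" and qs :: "'g \<Rightarrow> (nat \<Rightarrow> 'b) \<Rightarrow> real"
    and f :: "'a \<Rightarrow> 'b"
  assumes "scalar_structure scX" and "scalar_structure scY"
    and "invariant_seq_space scX E q"
    and "\<forall>l\<in>\<Gamma>. strongly_invariant_seq_space scY (Es l) (qs l)"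
    and "\<forall>l\<in>\<Gamma>. compatible scX f (Es l)"
    and "nested \<Gamma> Es"
  shows "G_set E f \<Gamma> Es = {} \<or> pointwise_c_spaceable scX E q (G_set E f \<Gamma> Es)"
proof -
  interpret qb scX E q by unfold_locales (use assms(1,3) in auto)
  have "pointwise_c_spaceable scX E q (G_set E f \<Gamma> Es)"
    unfolding pointwise_c_spaceable_def
  proof
    fix x assume x: "x \<in> G_set E f \<Gamma> Es"
    show "\<exists>W. W \<subseteq> E \<and> module.subspace (seq_scale scX) W \<and> closed_in_qnorm E q W \<and>
               dim_continuum (seq_scale scX) W \<and> x \<in> W \<and> W \<subseteq> G_set E f \<Gamma> Es \<union> {0}"
    proof (cases "\<Gamma> = {}")
      case True
      hence GE: "G_set E f \<Gamma> Es = E" by (auto simp: G_set_def)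
      hence "x \<in> E" using x by simp
      then obtain W where "W \<subseteq> E" "V.subspace W" "closed_in_qnorm E q W" "dim_continuum (seq_scale scX) W" "x \<in> W"
        using exists_W by blast
      thus ?thesis using GE by blast
    next
      case False
      show ?thesis using main_nonempty[OF assms(2,4,5,6) False x] by blast
    qed
  qed
  thus ?thesis by blast
qed

end
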